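(* For every oriented classical link $L$ with $\mu$ components, $Q_A^{red}(L)=\phi_\tau^{-1}\big(\{(t_1-1)\otimes1,\dots,(t_\mu-1)\otimes1\}\big)$.
   Context: Let $L=K_1\cup\dots\cup K_\mu$ be an oriented classical link with diagram $D$. $A(D)$ is the set of arcs of $D$ and $C(D)$ the set of crossings; $\kappa_D:A(D)\to\{1,\dots,\mu\}$ sends an arc to the index of its component. At a crossing $c$, $a_1$ is the overpassing arc, $a_2$ the underpassing arc on the right of $a_1$ (with respect to the orientation of $a_1$), $a_3$ the underpassing arc on the left of $a_1$. $\Lambda_\mu=\mathbb Z[t_1^{\pm1},\dots,t_\mu^{\pm1}]$, $\Lambda=\mathbb Z[t^{\pm1}]$, $\tau:\Lambda_\mu\to\Lambda$ the ring homomorphism with $\tau(t_i)=t$, making $\Lambda$ a $\Lambda_\mu$-module; $I_\mu$ is the augmentation ideal of $\Lambda_\mu$. $\rho_D:\Lambda_\mu^{C(D)}\to\Lambda_\mu^{A(D)}$ is the $\Lambda_\mu$-linear map with $\rho_D(c)=(1-t_{\kappa_D(a_2)})a_1+t_{\kappa_D(a_1)}a_2-a_3$; $M_A(L)=\operatorname{coker}\rho_D$ with quotient map $\gamma_D$; $\phi_L:M_A(L)\to I_\mu$ is the $\Lambda_\mu$-linear map with $\phi_L(\gamma_D(a))=t_{\kappa_D(a)}-1$. $M_A^{red}(L)=M_A(L)\otimes_{\Lambda_\mu}\Lambda$ and $\phi_\tau=\phi_L\otimes\mathrm{id}_\Lambda:M_A^{red}(L)\to I_\mu\otimes_{\Lambda_\mu}\Lambda$.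 A quandle is a set with a binary operation $\triangleright$ such that $x\triangleright x=x$, each translation $\beta_y(x)=x\triangleright y$ is a bijection (write $x\triangleright^{-1}y=\beta_y^{-1}(x)$), and $(x\triangleright y)\triangleright z=(x\triangleright z)\triangleright(y\triangleright z)$; the subquandle generated by a subset is the smallest subset containing it closed under $\triangleright,\triangleright^{-1}$. On $M_A(L)$ define $x\triangleright y=(\phi_L(y)+1)x-\phi_L(x)y$; this is a quandle operation on $U(L)=\{x:\phi_L(x)+1\text{ a unit of }\Lambda_\mu\}$, and $Q_A(L)$ is the subquandle of $U(L)$ generated by $\gamma_D(A(D))$. $Q_A^{red}(L)=\{x\otimes1:x\in Q_A(L)\}\subset M_A^{red}(L)$ with quandle operation $(x\otimes1)\triangleright(y\otimes1)=(x\triangleright y)\otimes 1$. *)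

theory Defs
  imports "HOL-Library.Poly_Mapping" "HOL-Library.Function_Algebras"
begin

section \<open>Combinatorial oriented link diagrams\<close>

text \<open>A diagram consists of crossings (type 'c), edges (type 'e; the oriented
segments of the diagram between consecutive crossings), for each crossing the
incoming/outgoing over- and under-edges, a sign (True = positive crossing),
a number of crossingless circle components, and a labelling of the components
by the finite type 'm (so mu = CARD('m)).\<close>

datatype slot = SIO | SOO | SIU | SOU

record ('c, 'e, 'm) diagram =
  crs :: "'c set"
  edg :: "'e set"
  inov :: "'c \<Rightarrow> 'e"
  outov :: "'c \<Rightarrow> 'e"
  inun :: "'c \<Rightarrow> 'e"
  outun :: "'c \<Rightarrow> 'e"
  pos :: "'c \<Rightarrow> bool"
  nloops :: nat
  labE :: "'e \<Rightarrow> 'm"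
  labL :: "nat \<Rightarrow> 'm"

definition edge_at :: "('c, 'e, 'm) diagram \<Rightarrow> 'c \<times> slot \<Rightarrow> 'e" where
  "edge_at D d = (case snd d of SIO \<Rightarrow> inov D (fst d) | SOO \<Rightarrow> outov D (fst d)
     | SIU \<Rightarrow> inun D (fst d) | SOU \<Rightarrow> outun D (fst d))"

definition is_out :: "slot \<Rightarrow> bool" where
  "is_out s \<longleftrightarrow> s = SOO \<or> s = SOU"

definition darts :: "('c, 'e, 'm) diagram \<Rightarrow> ('c \<times> slot) set" where
  "darts D = crs D \<times> UNIV"

text \<open>Counterclockwise cyclic order of the four half-edges at a crossing.
Positive crossing: over strand SW to NE, under strand SE to NW.
Negative crossing: over strand SE to NW, under strand SW to NE.\<close>

definition rot :: "('c, 'e, 'm) diagram \<Rightarrow> 'c \<times> slot \<Rightarrow> 'c \<times> slot" where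
  "rot D d = (fst d, (if pos D (fst d) then
       (case snd d of SOO \<Rightarrow> SOU | SOU \<Rightarrow> SIO | SIO \<Rightarrow> SIU | SIU \<Rightarrow> SOO)
     else (case snd d of SOU \<Rightarrow> SOO | SOO \<Rightarrow> SIU | SIU \<Rightarrow> SIO | SIO \<Rightarrow> SOU)))"

definition opp :: "('c, 'e, 'm) diagram \<Rightarrow> 'c \<times> slot \<Rightarrow> 'c \<times> slot" where
  "opp D d = (THE d'. d' \<in> darts D \<and> d' \<noteq> d \<and> edge_at D d' = edge_at D d)"

definition face_perm :: "('c, 'e, 'm) diagram \<Rightarrow> 'c \<times> slot \<Rightarrow> 'c \<times> slot" where
  "face_perm D d = rot D (opp D d)"

definition faces :: "('c, 'e, 'm) diagram \<Rightarrow> ('c \<times> slot) set set" where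
  "faces D = darts D // {(d, d'). d \<in> darts D \<and> (\<exists>n. (face_perm D ^^ n) d = d')}"

definition adj :: "('c, 'e, 'm) diagram \<Rightarrow> ('c \<times> 'c) set" where
  "adj D = {(c, c'). c \<in> crs D \<and> c' \<in> crs D \<and>
             (\<exists>s s'. edge_at D (c, s) = edge_at D (c', s'))}"

definition graph_components :: "('c, 'e, 'm) diagram \<Rightarrow> 'c set set" where
  "graph_components D = crs D // ((adj D)\<^sup>*)"

definition strand_rel :: "('c, 'e, 'm) diagram \<Rightarrow> ('e \<times> 'e) set" where
  "strand_rel D = {(inov D c, outov D c) | c. c \<in> crs D} \<union> {(inun D c, outun D c) | c. c \<in> crs D}"

text \<open>A classical oriented link diagram: well-formed 4-valent graph, every edge
has exactly one tail and one head, the rotation system is planar (Euler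
characteristic 2 for each connected component), and the labels enumerate the
link components bijectively by 'm.\<close>

definition link_diagram :: "('c, 'e, 'm) diagram \<Rightarrow> bool" where
  "link_diagram D \<longleftrightarrow>
     finite (crs D) \<and> finite (edg D) \<and>
     (\<forall>d \<in> darts D. edge_at D d \<in> edg D) \<and>
     (\<forall>e \<in> edg D. \<exists>!d. d \<in> darts D \<and> is_out (snd d) \<and> edge_at D d = e) \<and>
     (\<forall>e \<in> edg D. \<exists>!d. d \<in> darts D \<and> \<not> is_out (snd d) \<and> edge_at D d = e) \<and>
     card (faces D) = card (crs D) + 2 * card (graph_components D) \<and>
     (\<forall>c \<in> crs D. labE D (inov D c) = labE D (outov D c) \<and>
                  labE D (inun D c) = labE D (outun D c)) \<and>
     (\<forall>e \<in> edg D. \<forall>e' \<in> edg D. labE D e = labE D e' \<longrightarrow> (e, e') \<in> (strand_rel D)\<^sup>*) \<and>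
     inj_on (labL D) {..<nloops D} \<and>
     labL D ` {..<nloops D} \<inter> labE D ` edg D = {} \<and>
     labE D ` edg D \<union> labL D ` {..<nloops D} = UNIV"

definition arc_rel :: "('c, 'e, 'm) diagram \<Rightarrow> ('e \<times> 'e) set" where
  "arc_rel D = {(inov D c, outov D c) | c. c \<in> crs D}"

text \<open>Arcs: classes of edges connected through over-passages, plus one arc for
each crossingless circle.\<close>

definition arc_of :: "('c, 'e, 'm) diagram \<Rightarrow> 'e \<Rightarrow> 'e set + nat" where
  "arc_of D e = Inl (((arc_rel D) \<union> (arc_rel D)\<inverse>)\<^sup>* `` {e})"

definition arcs :: "('c, 'e, 'm) diagram \<Rightarrow> ('e set + nat) set" where
  "arcs D = arc_of D ` edg D \<union> Inr ` {..<nloops D}"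

definition kappa :: "('c, 'e, 'm) diagram \<Rightarrow> 'e set + nat \<Rightarrow> 'm" where
  "kappa D a = (case a of Inl S \<Rightarrow> labE D (SOME e. e \<in> S) | Inr i \<Rightarrow> labL D i)"

text \<open>At a crossing: a1 over-arc, a2 under-arc on the right of a1, a3 under-arc on the left.\<close>

definition a1 :: "('c, 'e, 'm) diagram \<Rightarrow> 'c \<Rightarrow> 'e set + nat" where
  "a1 D c = arc_of D (inov D c)"

definition a2 :: "('c, 'e, 'm) diagram \<Rightarrow> 'c \<Rightarrow> 'e set + nat" where
  "a2 D c = (if pos D c then arc_of D (inun D c) else arc_of D (outun D c))"

definition a3 :: "('c, 'e, 'm) diagram \<Rightarrow> 'c \<Rightarrow> 'e set + nat" where
  "a3 D c = (if pos D c then arc_of D (outun D c) else arc_of D (inun D c))"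

section \<open>Laurent polynomial rings\<close>

text \<open>Lambda_mu = Z[t_i^{+-1} : i in 'm] as the group ring of 'm => int;
Lambda = Z[t^{+-1}] as the group ring of int.\<close>

type_synonym 'm lp = "('m \<Rightarrow> int) \<Rightarrow>\<^sub>0 int"
type_synonym lp1 = "int \<Rightarrow>\<^sub>0 int"

definition tvar :: "'m \<Rightarrow> 'm lp" where
  "tvar i = Poly_Mapping.single (\<lambda>j. if j = i then 1 else 0) 1"

definition tau :: "('m::finite) lp \<Rightarrow> lp1" where
  "tau f = (\<Sum>v \<in> Poly_Mapping.keys f. Poly_Mapping.single (sum v UNIV) (Poly_Mapping.lookup f v))"

definition augmentation_ideal :: "'m lp set" where
  "augmentation_ideal = {f. (\<Sum>v \<in> Poly_Mapping.keys f. Poly_Mapping.lookup f v) = 0}"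

section \<open>The Alexander module M_A(L) = coker rho_D (elements of the free module
Lambda_mu^{A(D)} as representatives)\<close>

type_synonym ('e, 'm) fmod = "'e set + nat \<Rightarrow> 'm lp"

definition free_mod :: "('c, 'e, 'm) diagram \<Rightarrow> ('e, 'm) fmod set" where
  "free_mod D = {x. \<forall>a. a \<notin> arcs D \<longrightarrow> x a = 0}"

definition basis :: "'e set + nat \<Rightarrow> ('e, 'm) fmod" where
  "basis a = (\<lambda>b. if b = a then 1 else 0)"

definition smul :: "'m lp \<Rightarrow> ('e, 'm) fmod \<Rightarrow> ('e, 'm) fmod" where
  "smul r x = (\<lambda>b. r * x b)"

definition rho :: "('c, 'e, 'm) diagram \<Rightarrow> 'c \<Rightarrow> ('e, 'm) fmod" where
  "rho D c = smul (1 - tvar (kappa D (a2 D c))) (basis (a1 D c))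
           + smul (tvar (kappa D (a1 D c))) (basis (a2 D c)) - basis (a3 D c)"

definition im_rho :: "('c, 'e, 'm) diagram \<Rightarrow> ('e, 'm) fmod set" where
  "im_rho D = {(\<lambda>b. \<Sum>c \<in> crs D. r c * rho D c b) | r. True}"

definition mcong :: "('c, 'e, 'm) diagram \<Rightarrow> ('e, 'm) fmod \<Rightarrow> ('e, 'm) fmod \<Rightarrow> bool" where
  "mcong D x y \<longleftrightarrow> x - y \<in> im_rho D"

definition phiL :: "('c, 'e, 'm) diagram \<Rightarrow> ('e, 'm) fmod \<Rightarrow> 'm lp" where
  "phiL D x = (\<Sum>a \<in> arcs D. x a * (tvar (kappa D a) - 1))"

definition qop :: "('c, 'e, 'm) diagram \<Rightarrow> ('e, 'm) fmod \<Rightarrow> ('e, 'm) fmod \<Rightarrow> ('e, 'm) fmod" where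
  "qop D x y = smul (phiL D y + 1) x - smul (phiL D x) y"

definition UL :: "('c, 'e, 'm) diagram \<Rightarrow> ('e, 'm) fmod set" where
  "UL D = {x \<in> free_mod D. (\<exists>v. (phiL D x + 1) * v = 1)}"

text \<open>Q_A(L), as the set of all representatives of its elements (a union of
cosets of im rho): the subquandle of U(L) generated by the arcs, closed under
the operation and under its inverse z = beta_y^{-1}(x).\<close>

inductive_set QA :: "('c, 'e, 'm) diagram \<Rightarrow> ('e, 'm) fmod set" for D where
  gen: "a \<in> arcs D \<Longrightarrow> basis a \<in> QA D"
| cong: "x \<in> QA D \<Longrightarrow> y \<in> free_mod D \<Longrightarrow> mcong D x y \<Longrightarrow> y \<in> QA D"
| op: "x \<in> QA D \<Longrightarrow> y \<in> QA D \<Longrightarrow> qop D x y \<in> QA D"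
| inv: "x \<in> QA D \<Longrightarrow> y \<in> QA D \<Longrightarrow> z \<in> UL D \<Longrightarrow> mcong D (qop D z y) x \<Longrightarrow> z \<in> QA D"

section \<open>Tensor products (F / K) \<otimes>_{Lambda_mu} Lambda, by the literal construction:
free abelian group on pairs modulo bilinearity, balancing and K\<close>

definition gpair :: "'x \<Rightarrow> lp1 \<Rightarrow> ('x \<times> lp1) \<Rightarrow>\<^sub>0 int" where
  "gpair x l = Poly_Mapping.single (x, l) 1"

inductive_set tens_rels :: "'x::ab_group_add set \<Rightarrow> 'x set \<Rightarrow> ('m::finite lp \<Rightarrow> 'x \<Rightarrow> 'x)
    \<Rightarrow> (('x \<times> lp1) \<Rightarrow>\<^sub>0 int) set" for F K sm where
  zero: "0 \<in> tens_rels F K sm"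
| add1: "x \<in> F \<Longrightarrow> x' \<in> F \<Longrightarrow> gpair (x + x') l - gpair x l - gpair x' l \<in> tens_rels F K sm"
| add2: "x \<in> F \<Longrightarrow> gpair x (l + l') - gpair x l - gpair x l' \<in> tens_rels F K sm"
| bal: "x \<in> F \<Longrightarrow> gpair (sm r x) l - gpair x (tau r * l) \<in> tens_rels F K sm"
| ker: "k \<in> K \<Longrightarrow> gpair k l \<in> tens_rels F K sm"
| plus: "f \<in> tens_rels F K sm \<Longrightarrow> g \<in> tens_rels F K sm \<Longrightarrow> f + g \<in> tens_rels F K sm"
| neg: "f \<in> tens_rels F K sm \<Longrightarrow> - f \<in> tens_rels F K sm"

definition tens_chains :: "'x set \<Rightarrow> (('x \<times> lp1) \<Rightarrow>\<^sub>0 int) set" where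
  "tens_chains F = {f. Poly_Mapping.keys f \<subseteq> F \<times> UNIV}"

definition tens_equiv :: "'x::ab_group_add set \<Rightarrow> 'x set \<Rightarrow> ('m::finite lp \<Rightarrow> 'x \<Rightarrow> 'x)
    \<Rightarrow> ((('x \<times> lp1) \<Rightarrow>\<^sub>0 int) \<times> (('x \<times> lp1) \<Rightarrow>\<^sub>0 int)) set" where
  "tens_equiv F K sm = {(f, g). f \<in> tens_chains F \<and> g \<in> tens_chains F \<and> f - g \<in> tens_rels F K sm}"

definition tensor :: "'x::ab_group_add set \<Rightarrow> 'x set \<Rightarrow> ('m::finite lp \<Rightarrow> 'x \<Rightarrow> 'x)
    \<Rightarrow> (('x \<times> lp1) \<Rightarrow>\<^sub>0 int) set set" where
  "tensor F K sm = tens_chains F // tens_equiv F K sm"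

definition tcls :: "'x::ab_group_add set \<Rightarrow> 'x set \<Rightarrow> ('m::finite lp \<Rightarrow> 'x \<Rightarrow> 'x)
    \<Rightarrow> (('x \<times> lp1) \<Rightarrow>\<^sub>0 int) \<Rightarrow> (('x \<times> lp1) \<Rightarrow>\<^sub>0 int) set" where
  "tcls F K sm f = tens_equiv F K sm `` {f}"

definition ptens :: "'x::ab_group_add set \<Rightarrow> 'x set \<Rightarrow> ('m::finite lp \<Rightarrow> 'x \<Rightarrow> 'x)
    \<Rightarrow> 'x \<Rightarrow> lp1 \<Rightarrow> (('x \<times> lp1) \<Rightarrow>\<^sub>0 int) set" where
  "ptens F K sm x l = tcls F K sm (gpair x l)"

definition Mred :: "('c, 'e, 'm::finite) diagram \<Rightarrow> ((('e, 'm) fmod \<times> lp1) \<Rightarrow>\<^sub>0 int) set set" where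
  "Mred D = tensor (free_mod D) (im_rho D) smul"

definition Ired :: "((('m::finite) lp \<times> lp1) \<Rightarrow>\<^sub>0 int) set set" where
  "Ired = tensor augmentation_ideal {0} (*)"

definition ItensOne :: "('m::finite) lp \<Rightarrow> (('m lp \<times> lp1) \<Rightarrow>\<^sub>0 int) set" where
  "ItensOne x = ptens augmentation_ideal {0} (*) x 1"

text \<open>phi_tau = phi_L \<otimes> id, applied to a class via any representative chain\<close>
definition phi_tau :: "('c, 'e, 'm::finite) diagram \<Rightarrow> ((('e, 'm) fmod \<times> lp1) \<Rightarrow>\<^sub>0 int) set
    \<Rightarrow> (('m lp \<times> lp1) \<Rightarrow>\<^sub>0 int) set" where
  "phi_tau D W = tcls augmentation_ideal {0} (*)
      (frag_extend (\<lambda>(x, l). gpair (phiL D x) l) (SOME f. f \<in> W))"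

definition QAred :: "('c, 'e, 'm::finite) diagram \<Rightarrow> ((('e, 'm) fmod \<times> lp1) \<Rightarrow>\<^sub>0 int) set set" where
  "QAred D = (\<lambda>x. ptens (free_mod D) (im_rho D) smul x 1) ` QA D"

end

theory Submission
  imports Defs
begin


lemma frag_cmul_of: "frag_cmul c (frag_of k) = Poly_Mapping.single k c"
  by (rule poly_mapping_eqI) (simp add: lookup_single when_def)

definition lsum :: "('k \<Rightarrow> int) \<Rightarrow> ('k \<Rightarrow>\<^sub>0 int) \<Rightarrow> int" where
  "lsum h f = (\<Sum>v\<in>Poly_Mapping.keys f. Poly_Mapping.lookup f v * h v)"

lemma lsum_superset: "finite S \<Longrightarrow> Poly_Mapping.keys f \<subseteq> S \<Longrightarrow>
   lsum h f = (\<Sum>v\<in>S. Poly_Mapping.lookup f v * h v)"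
  unfolding lsum_def by (rule sum.mono_neutral_left) (auto simp: in_keys_iff)

lemma lsum_add: "lsum h (f + g) = lsum h f + lsum h g"
proof -
  let ?S = "Poly_Mapping.keys f \<union> Poly_Mapping.keys g"
  have "lsum h (f+g) = (\<Sum>v\<in>?S. Poly_Mapping.lookup (f+g) v * h v)"
    by (rule lsum_superset) (auto simp: keys_add)
  also have "\<dots> = (\<Sum>v\<in>?S. Poly_Mapping.lookup f v * h v) + (\<Sum>v\<in>?S. Poly_Mapping.lookup g v * h v)"
    by (simp add: lookup_add algebra_simps sum.distrib)
  also have "\<dots> = lsum h f + lsum h g"
    by (simp add: lsum_superset[symmetric])
  finally show ?thesis .
qed

lemma lsum_minus: "lsum h (- f) = - lsum h f"
  unfolding lsum_def by (simp add: sum_negf)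

lemma lsum_diff: "lsum h (f - g) = lsum h f - lsum h g"
  by (metis add_uminus_conv_diff lsum_add lsum_minus)

lemma lsum_zero[simp]: "lsum h 0 = 0" by (simp add: lsum_def)

lemma lsum_single[simp]: "lsum h (Poly_Mapping.single k c) = c * h k"
  unfolding lsum_def by (cases "c = 0") auto

lemma lsum_sum: "finite I \<Longrightarrow> lsum h (\<Sum>i\<in>I. g i) = (\<Sum>i\<in>I. lsum h (g i))"
  by (induction I rule: finite_induct) (auto simp: lsum_add)

lemma lsum_one: "lsum h (1 :: ('k::zero) \<Rightarrow>\<^sub>0 int) = h 0"
  by (metis lsum_single mult_1 single_one)

lemma frag_bilinear_eq:
  fixes B1 B2 :: "('k \<Rightarrow>\<^sub>0 int) \<Rightarrow> ('k \<Rightarrow>\<^sub>0 int) \<Rightarrow> 'r::ab_group_add"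
  assumes "\<And>a b g. B1 (a - b) g = B1 a g - B1 b g" "\<And>a b g. B2 (a - b) g = B2 a g - B2 b g"
    "\<And>a b f. B1 f (a - b) = B1 f a - B1 f b" "\<And>a b f. B2 f (a - b) = B2 f a - B2 f b"
    "\<And>x y. B1 (frag_of x) (frag_of y) = B2 (frag_of x) (frag_of y)"
  shows "B1 f g = B2 f g"
proof -
  have z1: "B1 0 g = 0" "B2 0 g = 0" for g using assms(1)[of 0 0 g] assms(2)[of 0 0 g] by auto
  have z2: "B1 f' 0 = 0" "B2 f' 0 = 0" for f' using assms(3)[of f' 0 0] assms(4)[of f' 0 0] by auto
  have X: "B1 (frag_of x) g = B2 (frag_of x) g" for x
    using subset_UNIV[of "Poly_Mapping.keys g"]
    by (induction g rule: frag_induction) (auto simp: z2 assms)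
  show ?thesis
    using subset_UNIV[of "Poly_Mapping.keys f"]
    by (induction f rule: frag_induction) (auto simp: z1 assms X)
qed

lemma lsum_mult:
  fixes h :: "'k::comm_monoid_add \<Rightarrow> int"
  assumes "\<And>a b. h (a + b) = h a * h b"
  shows "lsum h (f * g) = lsum h f * lsum h g"
  by (rule frag_bilinear_eq[of "\<lambda>f g. lsum h (f * g)" "\<lambda>f g. lsum h f * lsum h g"])
     (auto simp: lsum_diff algebra_simps mult_single assms)

lemma lsum_leibniz:
  fixes d :: "'k::comm_monoid_add \<Rightarrow> int"
  assumes "\<And>a b. d (a + b) = d a + d b"
  shows "lsum d (f * g) = lsum (\<lambda>_. 1) f * lsum d g + lsum d f * lsum (\<lambda>_. 1) g"
  by (rule frag_bilinear_eq[of "\<lambda>f g. lsum d (f * g)"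
        "\<lambda>f g. lsum (\<lambda>_. 1) f * lsum d g + lsum d f * lsum (\<lambda>_. 1) g"])
     (auto simp: lsum_diff algebra_simps mult_single assms)


lemma tau_frag: "tau f = frag_extend (\<lambda>v. frag_of (sum v UNIV)) f"
  unfolding tau_def frag_extend_def by (simp add: frag_cmul_of)

lemma tau_add: "tau (f + g) = tau f + tau g"
  by (simp add: tau_frag frag_extend_add)
lemma tau_diff: "tau (f - g) = tau f - tau g"
  by (simp add: tau_frag frag_extend_diff)
lemma tau_minus: "tau (- f) = - tau f"
  by (simp add: tau_frag frag_extend_minus)
lemma tau_zero[simp]: "tau 0 = 0"
  by (simp add: tau_frag)
lemma tau_single: "tau (Poly_Mapping.single v c) = Poly_Mapping.single (sum v UNIV) c"
  by (metis frag_cmul_of frag_extend_cmul frag_extend_of tau_frag)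
lemma tau_sum: "finite I \<Longrightarrow> tau (\<Sum>i\<in>I. g i) = (\<Sum>i\<in>I. tau (g i))"
  by (induction I rule: finite_induct) (auto simp: tau_add)

lemma tau_mult: "tau (f * g) = tau f * tau g"
  by (rule frag_bilinear_eq[of "\<lambda>f g. tau (f * g)" "\<lambda>f g. tau f * tau g"])
     (auto simp: tau_diff algebra_simps mult_single tau_single sum.distrib)

lemma tau_one[simp]: "tau 1 = 1"
  by (metis single_one tau_single sum.neutral zero_fun_def)

definition tvinv :: "'m \<Rightarrow> 'm lp" where
  "tvinv i = Poly_Mapping.single (\<lambda>j. if j = i then -1 else 0) 1"

abbreviation tt :: lp1 where "tt \<equiv> Poly_Mapping.single 1 1"
abbreviation tti :: lp1 where "tti \<equiv> Poly_Mapping.single (-1) 1"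

lemma tvar_tvinv: "tvar i * tvinv i = 1"
proof -
  have "(\<lambda>j. if j = i then 1 else 0) + (\<lambda>j. if j = i then -1 else (0::int)) = 0"
    by (auto simp: fun_eq_iff)
  then show ?thesis by (simp add: tvar_def tvinv_def mult_single)
qed

lemma tt_tti: "tt * tti = 1"
  by (simp add: mult_single)

lemma sum_ind: "(\<Sum>j\<in>(UNIV::'m::finite set). if j = i then c else 0) = (c::int)"
  by simp

lemma tau_tvar[simp]: "tau (tvar (i::'m::finite)) = tt"
  unfolding tvar_def tau_single by simp

lemma tau_tvinv[simp]: "tau (tvinv (i::'m::finite)) = tti"
  unfolding tvinv_def tau_single by simp

definition eps :: "('k \<Rightarrow>\<^sub>0 int) \<Rightarrow> int" where "eps = lsum (\<lambda>_. 1)"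
definition Dj :: "'m \<Rightarrow> 'm lp \<Rightarrow> int" where "Dj j = lsum (\<lambda>v. v j)"

lemma aug_iff: "f \<in> augmentation_ideal \<longleftrightarrow> eps f = 0"
  by (simp add: augmentation_ideal_def eps_def lsum_def)

lemma eps_mult: "eps (f * g) = eps f * eps (g :: ('k::comm_monoid_add) \<Rightarrow>\<^sub>0 int)"
  unfolding eps_def by (rule lsum_mult) simp

lemma eps_add: "eps (f + g) = eps f + eps g" by (simp add: eps_def lsum_add)
lemma eps_diff: "eps (f - g) = eps f - eps g" by (simp add: eps_def lsum_diff)
lemma eps_single[simp]: "eps (Poly_Mapping.single k c) = c" by (simp add: eps_def)
lemma eps_one[simp]: "eps (1::('k::zero) \<Rightarrow>\<^sub>0 int) = 1" by (simp add: eps_def lsum_one)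
lemma eps_zero[simp]: "eps 0 = 0" by (simp add: eps_def)

lemma eps_tau: "eps (tau f) = eps f"
  using subset_UNIV[of "Poly_Mapping.keys f"]
  by (induction f rule: frag_induction) (auto simp: tau_diff eps_diff tau_single)

lemma Dj_add: "Dj j (f + g) = Dj j f + Dj j g" by (simp add: Dj_def lsum_add)
lemma Dj_diff: "Dj j (f - g) = Dj j f - Dj j g" by (simp add: Dj_def lsum_diff)
lemma Dj_zero[simp]: "Dj j 0 = 0" by (simp add: Dj_def)
lemma Dj_one[simp]: "Dj j 1 = 0" by (simp add: Dj_def lsum_one)

lemma Dj_mult: "Dj j (f * g) = eps f * Dj j g + Dj j f * eps g"
  unfolding Dj_def eps_def by (rule lsum_leibniz) simp

lemma Dj_tvar: "Dj j (tvar i - 1) = (if i = j then 1 else 0)"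
  by (simp add: Dj_diff) (auto simp: tvar_def Dj_def)

lemma eps_tvar: "eps (tvar i - 1) = 0"
  by (simp add: eps_diff tvar_def)


lemma gpair_frag: "gpair x l = frag_of (x, l)"
  by (simp add: gpair_def)

lemma rels_diff: "f \<in> tens_rels F K sm \<Longrightarrow> g \<in> tens_rels F K sm \<Longrightarrow> f - g \<in> tens_rels F K sm"
proof -
  assume "f \<in> tens_rels F K sm" "g \<in> tens_rels F K sm"
  then have "f + - g \<in> tens_rels F K sm" by (intro tens_rels.plus tens_rels.neg)
  then show ?thesis by (simp only: diff_conv_add_uminus)
qed

lemma rels_sum: "finite I \<Longrightarrow> (\<And>i. i \<in> I \<Longrightarrow> g i \<in> tens_rels F K sm) \<Longrightarrow> (\<Sum>i\<in>I. g i) \<in> tens_rels F K sm"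
  by (induction I rule: finite_induct) (simp_all add: tens_rels.zero tens_rels.plus)

lemma rels_map:
  assumes "f \<in> tens_rels F K sm"
    and S0: "0 \<in> S" and Sp: "\<And>a b. a \<in> S \<Longrightarrow> b \<in> S \<Longrightarrow> a + b \<in> S" and Sn: "\<And>a. a \<in> S \<Longrightarrow> - a \<in> S"
    and A1: "\<And>x x' l. x \<in> F \<Longrightarrow> x' \<in> F \<Longrightarrow> G (x + x', l) - G (x, l) - G (x', l) \<in> S"
    and A2: "\<And>x l l'. x \<in> F \<Longrightarrow> G (x, l + l') - G (x, l) - G (x, l') \<in> S"
    and B: "\<And>x r l. x \<in> F \<Longrightarrow> G (sm r x, l) - G (x, tau r * l) \<in> S"
    and C: "\<And>k l. k \<in> K \<Longrightarrow> G (k, l) \<in> S"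
  shows "frag_extend G f \<in> S"
  using assms(1)
proof (induction rule: tens_rels.induct)
  case zero then show ?case using S0 by (simp only: frag_extend_0)
next
  case (add1 x x' l) then show ?case unfolding gpair_frag frag_extend_diff frag_extend_of using A1 by blast
next
  case (add2 x l l') then show ?case unfolding gpair_frag frag_extend_diff frag_extend_of using A2 by blast
next
  case (bal x r l) then show ?case unfolding gpair_frag frag_extend_diff frag_extend_of using B by blast
next
  case (ker k l) then show ?case unfolding gpair_frag frag_extend_of using C by blast
next
  case (plus f g) then show ?case unfolding frag_extend_add using Sp by blast
next
  case (neg f) then show ?case unfolding frag_extend_minus using Sn by blast
qed

lemma chains_diff: "f \<in> tens_chains F \<Longrightarrow> g \<in> tens_chains F \<Longrightarrow> f - g \<in> tens_chains F"
proof -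
  assume "f \<in> tens_chains F" "g \<in> tens_chains F"
  then have "Poly_Mapping.keys f \<union> Poly_Mapping.keys g \<subseteq> F \<times> UNIV" by (simp add: tens_chains_def)
  then have "Poly_Mapping.keys (f - g) \<subseteq> F \<times> UNIV" using keys_diff[of f g] by (rule_tac order_trans)
  then show ?thesis by (simp add: tens_chains_def)
qed

lemma gpair_chain: "x \<in> F \<Longrightarrow> gpair x l \<in> tens_chains F"
  by (simp add: tens_chains_def gpair_def)

lemma ag_tr: "(a::'a::ab_group_add) - b + (b - c) = a - c" by simp
lemma ag_neg: "- ((a::'a::ab_group_add) - b) = b - a" by simp
lemma equiv_tens: "equiv (tens_chains F) (tens_equiv F K sm)"
proof (rule equivI)
  show "tens_equiv F K sm \<subseteq> tens_chains F \<times> tens_chains F"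
    unfolding tens_equiv_def by blast
  show "refl_on (tens_chains F) (tens_equiv F K sm)"
    unfolding refl_on_def tens_equiv_def using tens_rels.zero by fastforce
  show "sym (tens_equiv F K sm)"
  proof (rule symI)
    fix f g assume "(f, g) \<in> tens_equiv F K sm"
    then have r: "f - g \<in> tens_rels F K sm" and c: "f \<in> tens_chains F" "g \<in> tens_chains F"
      unfolding tens_equiv_def by blast+
    have "- (f - g) \<in> tens_rels F K sm" using tens_rels.neg[OF r] .
    then have r2: "g - f \<in> tens_rels F K sm" by (simp only: ag_neg)
    show "(g, f) \<in> tens_equiv F K sm"
      unfolding tens_equiv_def using r2 c by simp
  qed
  show "trans (tens_equiv F K sm)"
  proof (rule transI)
    fix f g h assume "(f, g) \<in> tens_equiv F K sm" "(g, h) \<in> tens_equiv F K sm"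
    then have r: "f - g \<in> tens_rels F K sm" "g - h \<in> tens_rels F K sm" and c: "f \<in> tens_chains F" "h \<in> tens_chains F"
      unfolding tens_equiv_def by blast+
    have "(f - g) + (g - h) \<in> tens_rels F K sm" using tens_rels.plus[OF r] .
    then have r2: "f - h \<in> tens_rels F K sm" by (simp only: ag_tr)
    show "(f, h) \<in> tens_equiv F K sm"
      unfolding tens_equiv_def using r2 c by simp
  qed
qed

lemma tcls_eq:
  "f \<in> tens_chains F \<Longrightarrow> g \<in> tens_chains F \<Longrightarrow> f - g \<in> tens_rels F K sm \<Longrightarrow> tcls F K sm f = tcls F K sm g"
  unfolding tcls_def
  by (rule equiv_class_eq[OF equiv_tens]) (unfold tens_equiv_def, blast)

lemma tcls_self: "f \<in> tens_chains F \<Longrightarrow> f \<in> tcls F K sm f"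
  unfolding tcls_def by (rule equiv_class_self[OF equiv_tens])

lemma tcls_mem: "g \<in> tcls F K sm f \<Longrightarrow> g \<in> tens_chains F \<and> f - g \<in> tens_rels F K sm"
  unfolding tcls_def tens_equiv_def by blast

lemma tcls_eqD:
  "f \<in> tens_chains F \<Longrightarrow> tcls F K sm f = tcls F K sm g \<Longrightarrow> g - f \<in> tens_rels F K sm \<and> g \<in> tens_chains F"
proof -
  assume f: "f \<in> tens_chains F" and e: "tcls F K sm f = tcls F K sm g"
  have "f \<in> tcls F K sm g" using tcls_self[OF f, of K sm] e by simp
  then show ?thesis using tcls_mem[of f F K sm g] unfolding tcls_def tens_equiv_def by blast
qed


lemma ring_id1: "((1::'a::comm_ring_1) - b) * (a - 1) + a * (b - 1) - (b - 1) = 0"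
  by (simp add: algebra_simps)

lemma ring_id2: "((b::'a::comm_ring_1) + 1) * a - a * b = a"
  by (simp add: algebra_simps)

lemma ite01_mult[simp]: "(if P then 1 else 0) * (y::'a::semiring_1) = (if P then y else 0)"
  "y * (if P then 1 else 0) = (if P then y else 0)" by auto

locale ld = fixes D :: "('c, 'e, 'm::finite) diagram" assumes LD: "link_diagram D"
begin

lemma fin_crs: "finite (crs D)" using LD by (simp add: link_diagram_def)
lemma fin_edg: "finite (edg D)" using LD by (simp add: link_diagram_def)
lemma fin_arcs: "finite (arcs D)" using fin_edg by (simp add: arcs_def)

lemma edges_in:
  assumes "c \<in> crs D"
  shows "inov D c \<in> edg D" "outov D c \<in> edg D" "inun D c \<in> edg D" "outun D c \<in> edg D"
proof -
  have "\<forall>d \<in> darts D. edge_at D d \<in> edg D" using LD by (simp add: link_diagram_def)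
  then have "edge_at D (c, s) \<in> edg D" for s using assms by (simp add: darts_def)
  from this[of SIO] this[of SOO] this[of SIU] this[of SOU]
  show "inov D c \<in> edg D" "outov D c \<in> edg D" "inun D c \<in> edg D" "outun D c \<in> edg D"
    by (simp_all add: edge_at_def)
qed

lemma lab_cross: "c \<in> crs D \<Longrightarrow> labE D (inov D c) = labE D (outov D c) \<and> labE D (inun D c) = labE D (outun D c)"
  using LD by (simp add: link_diagram_def)

abbreviation "AR \<equiv> (arc_rel D \<union> (arc_rel D)\<inverse>)\<^sup>*"

lemma AR_lab: "(e, e') \<in> AR \<Longrightarrow> labE D e' = labE D e"
proof (induction rule: rtrancl_induct)
  case base then show ?case by simp
next
  case (step y z)
  then show ?case using lab_cross by (auto simp: arc_rel_def)
qed

lemma kappa_arc: "kappa D (arc_of D e) = labE D e"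
proof -
  have "e \<in> AR `` {e}" by simp
  then have "(SOME e'. e' \<in> AR `` {e}) \<in> AR `` {e}" by (rule someI)
  then show ?thesis unfolding kappa_def arc_of_def using AR_lab by auto
qed

lemma arc_of_eq: "(e, e') \<in> arc_rel D \<Longrightarrow> arc_of D e = arc_of D e'"
proof -
  assume a: "(e, e') \<in> arc_rel D"
  have sym: "sym AR" by (simp add: sym_Un_converse sym_rtrancl)
  have "(e, e') \<in> AR" using a by auto
  moreover have "(e', e) \<in> AR" using a by auto
  ultimately have "AR `` {e} = AR `` {e'}"
    by (auto intro: rtrancl_trans)
  then show ?thesis by (simp add: arc_of_def)
qed

lemma arc_in: "e \<in> edg D \<Longrightarrow> arc_of D e \<in> arcs D"
  by (simp add: arcs_def)

lemma a123_in: assumes "c \<in> crs D" shows "a1 D c \<in> arcs D" "a2 D c \<in> arcs D" "a3 D c \<in> arcs D"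
  using edges_in[OF assms] by (auto simp: a1_def a2_def a3_def arc_in)

lemma kappa23: "c \<in> crs D \<Longrightarrow> kappa D (a3 D c) = kappa D (a2 D c)"
  using lab_cross by (simp add: a2_def a3_def kappa_arc)

lemma fm_add: "x \<in> free_mod D \<Longrightarrow> y \<in> free_mod D \<Longrightarrow> x + y \<in> free_mod D"
  by (simp add: free_mod_def)
lemma fm_diff: "x \<in> free_mod D \<Longrightarrow> y \<in> free_mod D \<Longrightarrow> x - y \<in> free_mod D"
  by (simp add: free_mod_def)
lemma fm_zero: "0 \<in> free_mod D"
  by (simp add: free_mod_def)
lemma fm_smul: "x \<in> free_mod D \<Longrightarrow> smul r x \<in> free_mod D"
  by (simp add: free_mod_def smul_def)
lemma fm_basis: "a \<in> arcs D \<Longrightarrow> basis a \<in> free_mod D"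
  by (auto simp: free_mod_def basis_def)
lemma fm_sum: "finite I \<Longrightarrow> (\<And>i. i \<in> I \<Longrightarrow> g i \<in> free_mod D) \<Longrightarrow> (\<Sum>i\<in>I. g i) \<in> free_mod D"
  by (induction I rule: finite_induct) (auto simp: fm_zero fm_add)

lemma fm_expand: "x \<in> free_mod D \<Longrightarrow> x = (\<Sum>a\<in>arcs D. smul (x a) (basis a))"
proof (rule ext)
  fix b assume x: "x \<in> free_mod D"
  have s: "(\<Sum>a\<in>A. smul (x a) (basis a)) b = (\<Sum>a\<in>A. x a * basis a b)" for A
    by (induction A rule: infinite_finite_induct) (auto simp: smul_def)
  show "x b = (\<Sum>a\<in>arcs D. smul (x a) (basis a)) b"
    using x fin_arcs unfolding s by (cases "b \<in> arcs D") (auto simp: basis_def free_mod_def)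
qed

lemma phi_add: "phiL D (x + y) = phiL D x + phiL D y"
  by (simp add: phiL_def distrib_right sum.distrib)
lemma phi_diff: "phiL D (x - y) = phiL D x - phiL D y"
  by (simp add: phiL_def left_diff_distrib sum_subtractf)
lemma phi_smul: "phiL D (smul r x) = r * phiL D x"
  by (simp add: phiL_def smul_def sum_distrib_left mult.assoc)
lemma phi_zero: "phiL D 0 = 0"
  by (simp add: phiL_def)
lemma phi_basis: "a \<in> arcs D \<Longrightarrow> phiL D (basis a) = tvar (kappa D a) - 1"
  using fin_arcs by (simp add: phiL_def basis_def)

lemma phi_rho: assumes c: "c \<in> crs D" shows "phiL D (rho D c) = 0"
proof -
  have "phiL D (rho D c) = (1 - tvar (kappa D (a2 D c))) * (tvar (kappa D (a1 D c)) - 1)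
     + tvar (kappa D (a1 D c)) * (tvar (kappa D (a2 D c)) - 1) - (tvar (kappa D (a3 D c)) - 1)"
    unfolding rho_def phi_add phi_diff phi_smul phi_basis[OF a123_in(1)[OF c]]
      phi_basis[OF a123_in(2)[OF c]] phi_basis[OF a123_in(3)[OF c]] by (rule refl)
  also have "\<dots> = 0" unfolding kappa23[OF c] by (rule ring_id1)
  finally show ?thesis .
qed

lemma phi_imrho: "z \<in> im_rho D \<Longrightarrow> phiL D z = 0"
proof -
  assume "z \<in> im_rho D"
  then obtain r where z: "z = (\<lambda>b. \<Sum>c\<in>crs D. r c * rho D c b)" by (auto simp: im_rho_def)
  have "phiL D z = (\<Sum>c\<in>crs D. r c * phiL D (rho D c))"
    unfolding z phiL_def by (simp add: sum_distrib_right sum_distrib_left sum.swap[of _ "arcs D"] mult.assoc)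
  also have "\<dots> = 0" by (simp add: phi_rho)
  finally show ?thesis .
qed

lemma rho_imrho: "c \<in> crs D \<Longrightarrow> rho D c \<in> im_rho D"
proof -
  assume c: "c \<in> crs D"
  have e: "rho D c = (\<lambda>b. \<Sum>c'\<in>crs D. (\<lambda>c'. if c' = c then 1 else 0) c' * rho D c' b)"
  proof (rule ext)
    fix b
    show "rho D c b = (\<Sum>c'\<in>crs D. (\<lambda>c'. if c' = c then 1 else 0) c' * rho D c' b)"
      using c fin_crs by simp
  qed
  show ?thesis unfolding im_rho_def mem_Collect_eq
    by (rule exI, rule conjI[OF e TrueI])
qed

lemma eps_sum: "finite I \<Longrightarrow> eps (\<Sum>i\<in>I. g i) = (\<Sum>i\<in>I. eps (g i))"
  by (induction I rule: finite_induct) (auto simp: eps_add)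

lemma phi_aug: "phiL D x \<in> augmentation_ideal"
  unfolding aug_iff phiL_def using fin_arcs by (simp add: eps_sum eps_mult eps_tvar)

lemma QA_free: "x \<in> QA D \<Longrightarrow> x \<in> free_mod D"
proof (induction rule: QA.induct)
  case (gen a) then show ?case by (rule fm_basis)
next
  case (cong x y) then show ?case by simp
next
  case (op x y) then show ?case unfolding qop_def by (intro fm_diff fm_smul) simp_all
next
  case (inv x y z) then show ?case by (simp add: UL_def)
qed

lemma phi_qop: "phiL D (qop D x y) = phiL D x"
  unfolding qop_def phi_diff phi_smul by (rule ring_id2)

lemma QA_phi: "x \<in> QA D \<Longrightarrow> \<exists>i. phiL D x = tvar i - 1"
proof (induction rule: QA.induct)
  case (gen a) then show ?case by (auto simp: phi_basis)
next
  case (cong x y)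
  then have "phiL D (x - y) = 0" by (simp add: mcong_def phi_imrho)
  then have "phiL D y = phiL D x" by (simp add: phi_diff)
  then show ?case using cong by simp
next
  case (op x y) then show ?case by (simp add: phi_qop)
next
  case (inv x y z)
  then have "phiL D (qop D z y - x) = 0" by (simp add: mcong_def phi_imrho)
  then have "phiL D z = phiL D x" by (simp add: phi_diff phi_qop)
  then show ?case using inv by simp
qed

end


lemma ag_a: "(c::'a::ab_group_add) - (a - b) = - (a - c - b)" by simp
lemma ag_b: "(a::'a::ab_group_add) - a - a = - a" by simp
lemma ag_c: "(p::'a::ab_group_add) - (q + r) = (p - q - s) + (s - r)" by simp
lemma ag_d: "((a::'a::ab_group_add) - ea) - (b - eb) - (e - (ea - eb)) = (a - b) - e" by simp
lemma ag_e: "(a::'a::ab_group_add) - b + b = a" by simp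
lemma ag_f: "(a::'a::ab_group_add) - b - c + c = a - b" by simp

lemma rels_from_diff: "a - b \<in> tens_rels F K sm \<Longrightarrow> b \<in> tens_rels F K sm \<Longrightarrow> a \<in> tens_rels F K sm"
proof -
  assume "a - b \<in> tens_rels F K sm" "b \<in> tens_rels F K sm"
  then have "a - b + b \<in> tens_rels F K sm" by (rule tens_rels.plus)
  then show ?thesis by (simp only: ag_e)
qed

lemma rels_neg_iff: "- a \<in> tens_rels F K sm \<Longrightarrow> a \<in> tens_rels F K sm"
  using tens_rels.neg[of "- a"] by (simp only: minus_minus)

context ld
begin

abbreviation "RM \<equiv> tens_rels (free_mod D) (im_rho D) smul"

definition E :: "('e set + nat \<Rightarrow> lp1) \<Rightarrow> ((('e, 'm) fmod \<times> lp1) \<Rightarrow>\<^sub>0 int)" where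
  "E v = (\<Sum>a\<in>arcs D. gpair (basis a) (v a))"

definition red :: "('e, 'm) fmod \<Rightarrow> ('e set + nat \<Rightarrow> lp1)" where
  "red x = (\<lambda>a. tau (x a))"

definition Zs :: "('e set + nat \<Rightarrow> lp1) set" where
  "Zs = {z. E z \<in> RM}"

lemma zero_imrho: "0 \<in> im_rho D"
proof -
  have "(0::('e,'m) fmod) = (\<lambda>b. \<Sum>c\<in>crs D. (\<lambda>_. 0) c * rho D c b)" by (rule ext) simp
  then show ?thesis unfolding im_rho_def mem_Collect_eq by (rule_tac exI, rule conjI[OF _ TrueI])
qed

lemma E_add: "E (v + w) - E v - E w \<in> RM"
proof -
  have "E (v + w) - E v - E w = (\<Sum>a\<in>arcs D. gpair (basis a) (v a + w a) - gpair (basis a) (v a) - gpair (basis a) (w a))"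
    by (simp only: E_def sum_subtractf plus_fun_apply)
  also have "\<dots> \<in> RM"
    by (rule rels_sum[OF fin_arcs]) (rule tens_rels.add2, erule fm_basis)
  finally show ?thesis .
qed

lemma E_diff: "E (v - w) - (E v - E w) \<in> RM"
proof -
  have "E (v - w) - (E v - E w) = (\<Sum>a\<in>arcs D. gpair (basis a) (v a - w a) - (gpair (basis a) (v a) - gpair (basis a) (w a)))"
    by (simp only: E_def sum_subtractf minus_apply)
  also have "\<dots> \<in> RM"
  proof (rule rels_sum[OF fin_arcs])
    fix a assume a: "a \<in> arcs D"
    have "gpair (basis a) ((v a - w a) + w a) - gpair (basis a) (v a - w a) - gpair (basis a) (w a) \<in> RM"
      by (rule tens_rels.add2, rule fm_basis[OF a])
    then have "- (gpair (basis a) (v a) - gpair (basis a) (v a - w a) - gpair (basis a) (w a)) \<in> RM"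
      unfolding ag_e by (rule tens_rels.neg)
    then show "gpair (basis a) (v a - w a) - (gpair (basis a) (v a) - gpair (basis a) (w a)) \<in> RM"
      by (simp only: ag_a)
  qed
  finally show ?thesis .
qed

lemma E_zero: "E 0 \<in> RM"
proof -
  have "E (0 + 0) - E 0 - E 0 \<in> RM" by (rule E_add)
  then have "- E 0 \<in> RM" by (simp only: add_0_left ag_b)
  then show ?thesis by (rule rels_neg_iff)
qed

lemma Z_zero: "0 \<in> Zs" by (simp add: Zs_def E_zero)

lemma Z_add: "z \<in> Zs \<Longrightarrow> z' \<in> Zs \<Longrightarrow> z + z' \<in> Zs"
  unfolding Zs_def mem_Collect_eq
  by (rule rels_from_diff[OF rels_from_diff[OF E_add]])

lemma Z_diff: "z \<in> Zs \<Longrightarrow> z' \<in> Zs \<Longrightarrow> z - z' \<in> Zs"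
  unfolding Zs_def mem_Collect_eq
  by (rule rels_from_diff[OF E_diff rels_diff])

lemma Z_neg: "z \<in> Zs \<Longrightarrow> - z \<in> Zs"
  using Z_diff[OF Z_zero] by (metis diff_0)

lemma E_cong: "(\<And>a. a \<in> arcs D \<Longrightarrow> z a = z' a) \<Longrightarrow> E z = E z'"
  unfolding E_def by (rule sum.cong) auto

lemma Z_arcs: "(\<And>a. a \<in> arcs D \<Longrightarrow> z a = 0) \<Longrightarrow> z \<in> Zs"
  using E_cong[of z 0] E_zero by (simp add: Zs_def)

definition Mp :: "lp1 \<Rightarrow> (('e, 'm) fmod \<times> lp1) \<Rightarrow> ((('e, 'm) fmod \<times> lp1) \<Rightarrow>\<^sub>0 int)" where
  "Mp p = (\<lambda>(x, l). gpair x (p * l))"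

lemma Mp_rels: "f \<in> RM \<Longrightarrow> frag_extend (Mp p) f \<in> RM"
proof (erule rels_map)
  show "0 \<in> RM" by (rule tens_rels.zero)
  show "\<And>a b. a \<in> RM \<Longrightarrow> b \<in> RM \<Longrightarrow> a + b \<in> RM" by (rule tens_rels.plus)
  show "\<And>a. a \<in> RM \<Longrightarrow> - a \<in> RM" by (rule tens_rels.neg)
  show "\<And>x x' l. x \<in> free_mod D \<Longrightarrow> x' \<in> free_mod D \<Longrightarrow> Mp p (x + x', l) - Mp p (x, l) - Mp p (x', l) \<in> RM"
    unfolding Mp_def prod.case by (rule tens_rels.add1)
  show "\<And>x l l'. x \<in> free_mod D \<Longrightarrow> Mp p (x, l + l') - Mp p (x, l) - Mp p (x, l') \<in> RM"
    unfolding Mp_def prod.case distrib_left by (rule tens_rels.add2)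
  show "\<And>x r l. x \<in> free_mod D \<Longrightarrow> Mp p (smul r x, l) - Mp p (x, tau r * l) \<in> RM"
    unfolding Mp_def prod.case mult.left_commute[of p] by (rule tens_rels.bal)
  show "\<And>k l. k \<in> im_rho D \<Longrightarrow> Mp p (k, l) \<in> RM"
    unfolding Mp_def prod.case by (rule tens_rels.ker)
qed

lemma E_Mp: "frag_extend (Mp p) (E v) = E (\<lambda>a. p * v a)"
  unfolding E_def frag_extend_sum[OF fin_arcs] o_def gpair_frag frag_extend_of Mp_def prod.case ..

lemma Z_scal: "z \<in> Zs \<Longrightarrow> (\<lambda>a. p * z a) \<in> Zs"
  unfolding Zs_def mem_Collect_eq E_Mp[symmetric] by (rule Mp_rels)

lemma gpair_sum: "finite A \<Longrightarrow> (\<And>a. a \<in> A \<Longrightarrow> y a \<in> free_mod D) \<Longrightarrow>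
  gpair (\<Sum>a\<in>A. y a) l - (\<Sum>a\<in>A. gpair (y a) l) \<in> RM"
proof (induction A rule: finite_induct)
  case empty
  have "gpair (0 + 0) l - gpair 0 l - gpair 0 l \<in> RM" by (rule tens_rels.add1[OF fm_zero fm_zero])
  then have "- gpair 0 l \<in> RM" by (simp only: add_0_left ag_b)
  then show ?case by (simp only: sum.empty diff_zero rels_neg_iff)
next
  case (insert a A)
  have y: "y a \<in> free_mod D" "sum y A \<in> free_mod D"
    using insert by (auto intro!: fm_sum)
  have "gpair (y a + sum y A) l - gpair (y a) l - gpair (sum y A) l
        + (gpair (sum y A) l - (\<Sum>a\<in>A. gpair (y a) l)) \<in> RM"
    by (rule tens_rels.plus[OF tens_rels.add1[OF y] insert.IH]) (use insert in auto)
  then show ?case unfolding sum.insert[OF insert.hyps] ag_c[symmetric] .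
qed

lemma Dec: assumes x: "x \<in> free_mod D"
  shows "gpair x l - E (\<lambda>a. tau (x a) * l) \<in> RM"
proof -
  have s1: "gpair x l - (\<Sum>a\<in>arcs D. gpair (smul (x a) (basis a)) l) \<in> RM"
    using gpair_sum[OF fin_arcs, of "\<lambda>a. smul (x a) (basis a)" l] fm_expand[OF x]
    by (simp add: fm_smul fm_basis)
  have s2: "(\<Sum>a\<in>arcs D. gpair (smul (x a) (basis a)) l) - E (\<lambda>a. tau (x a) * l) \<in> RM"
    unfolding E_def sum_subtractf[symmetric]
    by (rule rels_sum[OF fin_arcs], rule tens_rels.bal, erule fm_basis)
  have "gpair x l - (\<Sum>a\<in>arcs D. gpair (smul (x a) (basis a)) l) +
    ((\<Sum>a\<in>arcs D. gpair (smul (x a) (basis a)) l) - E (\<lambda>a. tau (x a) * l)) \<in> RM"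
    by (rule tens_rels.plus[OF s1 s2])
  then show ?thesis by (simp only: ag_tr)
qed

lemma Dec1: "x \<in> free_mod D \<Longrightarrow> gpair x 1 - E (red x) \<in> RM"
  using Dec[of x 1] by (simp add: red_def)

lemma Chain: assumes "f \<in> tens_chains (free_mod D)" shows "\<exists>v. f - E v \<in> RM"
proof -
  have "Poly_Mapping.keys f \<subseteq> free_mod D \<times> UNIV" using assms by (simp add: tens_chains_def)
  then show ?thesis
  proof (induction f rule: frag_induction)
    case zero
    have "- E 0 \<in> RM" by (rule tens_rels.neg[OF E_zero])
    then show ?case by (metis diff_0)
  next
    case (one p)
    obtain x l where p: "p = (x, l)" and x: "x \<in> free_mod D" using one by auto
    show ?case using Dec[OF x, of l] unfolding p gpair_frag by blast
  next
    case (diff a b)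
    then obtain va vb where a: "a - E va \<in> RM" and b: "b - E vb \<in> RM" by blast
    have "(a - E va) - (b - E vb) - (E (va - vb) - (E va - E vb)) \<in> RM"
      by (rule rels_diff[OF rels_diff[OF a b] E_diff])
    then have "(a - b) - E (va - vb) \<in> RM" by (simp only: ag_d)
    then show ?case by blast
  qed
qed

end


lemma cr1: "(t::'a::comm_ring_1) * v + (1 - t) * w - (t * rx - (t - 1) * ry) = t * (v - rx) + (1 - t) * (w - ry)"
  by (simp add: algebra_simps)
lemma cr2: "(s::'a::comm_ring_1) * t = 1 \<Longrightarrow> s * (a + a * (t - 1)) = a"
  by (simp add: algebra_simps)
lemma cr3: "(t::'a::comm_ring_1) * s = 1 \<Longrightarrow> t * (s * (X + A * Y)) - A * Y = X"
proof -
  assume h: "t * s = 1"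
  have "t * (s * (X + A * Y)) = (t * s) * (X + A * Y)" by (simp only: mult.assoc)
  then show ?thesis using h by simp
qed
lemma cr4: "(s::'a::comm_ring_1) * t = 1 \<Longrightarrow>
   s * v + (1 - s) * w - s * (rx + (t - 1) * ry) = s * (v - rx) + (1 - s) * (w - ry)"
proof -
  assume h: "s * t = 1"
  have "s * ((t - 1) * ry) = (s * t - s) * ry" by (simp add: algebra_simps)
  also have "\<dots> = (1 - s) * ry" by (simp only: h)
  finally have e: "s * (rx + (t - 1) * ry) = s * rx + (1 - s) * ry" by (simp only: distrib_left)
  show ?thesis by (simp only: e) (simp add: algebra_simps)
qed

lemma cr5: "(t::'a::comm_ring_1) * s = 1 \<Longrightarrow> t * (s * v + (1 - s) * u') + (1 - t) * u = v + (1 - t) * (u - u')"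
proof -
  assume h: "t * s = 1"
  have "t * (s * v + (1 - s) * u') = (t * s) * v + (t - t * s) * u'" by (simp add: algebra_simps)
  also have "\<dots> = v + (t - 1) * u'" by (simp only: h mult_1)
  finally have e: "t * (s * v + (1 - s) * u') = v + (t - 1) * u'" .
  show ?thesis by (simp only: e) (simp add: algebra_simps)
qed

lemma cr6: "(t::'a::comm_ring_1) * (u' + p * (u - u')) + (1 - t) * u' = u' + (t * p) * (u - u')"
  by (simp add: algebra_simps)
lemma cr7: "(u'::'a::comm_ring_1) + p * (u - u') - u' = p * (u - u')"
  by (simp add: algebra_simps)
lemma cr8: "(v::'a::comm_ring_1) + ((1 - t) * a) * (u - u') + ((1 - t) * b) * (u' - u) = v + ((1 - t) * (a - b)) * (u - u')"
  by (simp add: algebra_simps)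
lemma cr9: "(v::'a::comm_ring_1) + ((1 - t) * p) * (n + m) = (v + ((1 - t) * p) * n) + ((1 - t) * p) * m"
  by (simp add: algebra_simps)
lemma cr10: "((1::'a::comm_ring_1) - t) * p * (q * n) = ((1 - t) * (p * q)) * n"
  by (simp add: algebra_simps)
lemma cr11: "p * ((e3::'a::comm_ring_1) - e2) - (1 - t) * (p * (e1 - e2)) = - (p * ((1 - t) * e1 + t * e2 - e3))"
  by (simp add: algebra_simps)

lemma ag_g: "((v::'a::ab_group_add) - r) + z = (v + z) - r" by (simp add: algebra_simps)

lemma tau_tvar1: "tau (tvar i - 1) = tt - 1" by (simp add: tau_diff)

lemma sum_fun_apply: "(\<Sum>i\<in>I. f i) x = (\<Sum>i\<in>I. f i x)"
  by (induction I rule: infinite_finite_induct) auto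

context ld
begin

definition ee :: "'e set + nat \<Rightarrow> 'e set + nat \<Rightarrow> lp1" where
  "ee a = (\<lambda>b. if b = a then 1 else 0)"

lemma red_basis: "red (basis a) = ee a"
  by (rule ext) (simp add: red_def basis_def ee_def)

lemma red_qop: "phiL D x = tvar i - 1 \<Longrightarrow> phiL D y = tvar j - 1 \<Longrightarrow>
   red (qop D x y) = (\<lambda>a. tt * red x a - (tt - 1) * red y a)"
  by (rule ext) (simp only: red_def qop_def minus_apply smul_def diff_add_cancel tau_diff tau_mult tau_tvar tau_tvar1 tau_one)

lemma red_rho: "red (rho D c) = (\<lambda>b. (1 - tt) * ee (a1 D c) b + tt * ee (a2 D c) b - ee (a3 D c) b)"
  by (rule ext) (simp add: red_def rho_def smul_def tau_diff tau_mult tau_add basis_def ee_def)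

definition T where "T = {v. \<exists>x\<in>QA D. v - red x \<in> Zs}"

lemma T_Z: "v \<in> T \<Longrightarrow> z \<in> Zs \<Longrightarrow> v + z \<in> T"
proof -
  assume "v \<in> T" "z \<in> Zs"
  then obtain x where x: "x \<in> QA D" "v - red x \<in> Zs" by (auto simp: T_def)
  have "(v - red x) + z \<in> Zs" by (rule Z_add[OF x(2) \<open>z \<in> Zs\<close>])
  then have "(v + z) - red x \<in> Zs" by (simp only: ag_g)
  then show ?thesis using x(1) unfolding T_def by blast
qed

lemma T_basis: "a \<in> arcs D \<Longrightarrow> ee a \<in> T"
proof -
  assume a: "a \<in> arcs D"
  have "ee a - red (basis a) \<in> Zs" unfolding red_basis diff_self by (rule Z_zero)
  then show ?thesis using QA.gen[OF a] unfolding T_def by blast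
qed

lemma T_op: assumes "v \<in> T" "w \<in> T" shows "(\<lambda>a. tt * v a + (1 - tt) * w a) \<in> T"
proof -
  obtain x where x: "x \<in> QA D" "v - red x \<in> Zs" using assms by (auto simp: T_def)
  obtain y where y: "y \<in> QA D" "w - red y \<in> Zs" using assms by (auto simp: T_def)
  obtain i where i: "phiL D x = tvar i - 1" using QA_phi[OF x(1)] by blast
  obtain j where j: "phiL D y = tvar j - 1" using QA_phi[OF y(1)] by blast
  have "(\<lambda>a. tt * (v - red x) a) + (\<lambda>a. (1 - tt) * (w - red y) a) \<in> Zs"
    by (rule Z_add[OF Z_scal[OF x(2)] Z_scal[OF y(2)]])
  moreover have "(\<lambda>a. tt * (v - red x) a) + (\<lambda>a. (1 - tt) * (w - red y) a)
      = (\<lambda>a. tt * v a + (1 - tt) * w a) - red (qop D x y)"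
    by (rule ext) (simp only: red_qop[OF i j] plus_fun_apply minus_apply cr1)
  ultimately have "(\<lambda>a. tt * v a + (1 - tt) * w a) - red (qop D x y) \<in> Zs" by (simp only:)
  then show ?thesis using QA.op[OF x(1) y(1)] unfolding T_def by blast
qed

lemma T_inv: assumes "v \<in> T" "w \<in> T" shows "(\<lambda>a. tti * v a + (1 - tti) * w a) \<in> T"
proof -
  obtain x where x: "x \<in> QA D" "v - red x \<in> Zs" using assms by (auto simp: T_def)
  obtain y where y: "y \<in> QA D" "w - red y \<in> Zs" using assms by (auto simp: T_def)
  obtain i where i: "phiL D x = tvar i - 1" using QA_phi[OF x(1)] by blast
  obtain j where j: "phiL D y = tvar j - 1" using QA_phi[OF y(1)] by blast
  define z where "z = smul (tvinv j) (x + smul (tvar i - 1) y)"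
  have inv1: "tvinv j * tvar j = 1" using tvar_tvinv by (simp add: mult.commute)
  have zf: "z \<in> free_mod D" unfolding z_def
    by (intro fm_smul fm_add QA_free x y)
  have pz: "phiL D z = tvar i - 1"
    unfolding z_def phi_smul phi_add i j by (rule cr2[OF inv1])
  have zU: "z \<in> UL D" unfolding UL_def using zf pz tvar_tvinv[of i] by auto
  have qz: "qop D z y = x"
  proof (rule ext)
    fix b
    have zb: "z b = tvinv j * (x b + (tvar i - 1) * y b)" by (simp add: z_def smul_def)
    show "qop D z y b = x b"
      unfolding qop_def minus_apply smul_def pz j zb diff_add_cancel by (rule cr3[OF tvar_tvinv])
  qed
  have zQ: "z \<in> QA D"
    by (rule QA.inv[OF x(1) y(1) zU]) (simp add: qz mcong_def zero_imrho)
  have rz: "red z = (\<lambda>a. tti * (red x a + (tt - 1) * red y a))"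
    by (rule ext) (simp add: z_def red_def smul_def tau_mult tau_add tau_diff)
  have "(\<lambda>a. tti * (v - red x) a) + (\<lambda>a. (1 - tti) * (w - red y) a) \<in> Zs"
    by (rule Z_add[OF Z_scal[OF x(2)] Z_scal[OF y(2)]])
  moreover have "(\<lambda>a. tti * (v - red x) a) + (\<lambda>a. (1 - tti) * (w - red y) a)
      = (\<lambda>a. tti * v a + (1 - tti) * w a) - red z"
    by (rule ext) (simp only: rz plus_fun_apply minus_apply cr4[OF tt_tti[unfolded mult.commute[of tt]]])
  ultimately have "(\<lambda>a. tti * v a + (1 - tti) * w a) - red z \<in> Zs" by (simp only:)
  then show ?thesis using zQ unfolding T_def by blast
qed

end


lemma ag_h: "(a::'a::ab_group_add) - (a - b) = b" by simp

lemma gr1: "((h::'a::comm_ring_1) - c * n) + (h' - c * n') = (h + h') - c * (n + n')"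
  by (simp add: algebra_simps)
lemma gr2: "(q::'a::comm_ring_1) * (h - c * n) = q * h - c * (q * n)"
  by (simp add: algebra_simps)
lemma gr3: "((v::'a::ab_group_add) + cn) + (h - cn) = v + h"
  by (simp add: algebra_simps)

context ld
begin

lemma T_B: assumes "v \<in> T" "u \<in> T" "u' \<in> T"
  shows "(\<lambda>a. v a + (1 - tt) * (u a - u' a)) \<in> T"
proof -
  have w: "(\<lambda>a. tti * v a + (1 - tti) * u' a) \<in> T" by (rule T_inv[OF assms(1,3)])
  have "(\<lambda>a. tt * (\<lambda>a. tti * v a + (1 - tti) * u' a) a + (1 - tt) * u a) \<in> T"
    by (rule T_op[OF w assms(2)])
  moreover have "(\<lambda>a. tt * (\<lambda>a. tti * v a + (1 - tti) * u' a) a + (1 - tt) * u a)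
     = (\<lambda>a. v a + (1 - tt) * (u a - u' a))"
    by (rule ext) (simp only: cr5[OF tt_tti])
  ultimately show ?thesis by (simp only:)
qed

lemma T_pow: assumes "u \<in> T" "u' \<in> T"
  shows "(\<lambda>a. u' a + Poly_Mapping.single k 1 * (u a - u' a)) \<in> T"
proof (induction k rule: int_induct[where k=0])
  case base
  have "(\<lambda>a. u' a + Poly_Mapping.single 0 1 * (u a - u' a)) = u"
    by (rule ext) simp
  then show ?case using assms by simp
next
  case (step1 i)
  have "(\<lambda>a. tt * (\<lambda>a. u' a + Poly_Mapping.single i 1 * (u a - u' a)) a + (1 - tt) * u' a) \<in> T"
    by (rule T_op[OF step1(2) assms(2)])
  moreover have "(\<lambda>a. tt * (\<lambda>a. u' a + Poly_Mapping.single i 1 * (u a - u' a)) a + (1 - tt) * u' a)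
     = (\<lambda>a. u' a + Poly_Mapping.single (i + 1) 1 * (u a - u' a))"
    by (rule ext) (simp only: cr6 mult_single add.commute[of 1 i] mult_1)
  ultimately show ?case by (simp only:)
next
  case (step2 i)
  have "(\<lambda>a. tti * (\<lambda>a. u' a + Poly_Mapping.single i 1 * (u a - u' a)) a + (1 - tti) * u' a) \<in> T"
    by (rule T_inv[OF step2(2) assms(2)])
  moreover have "(\<lambda>a. tti * (\<lambda>a. u' a + Poly_Mapping.single i 1 * (u a - u' a)) a + (1 - tti) * u' a)
     = (\<lambda>a. u' a + Poly_Mapping.single (i - 1) 1 * (u a - u' a))"
  proof (rule ext)
    fix a
    have e: "tti * Poly_Mapping.single i 1 = Poly_Mapping.single (i - 1) (1::int)"
      by (simp add: mult_single)
    show "tti * (\<lambda>a. u' a + Poly_Mapping.single i 1 * (u a - u' a)) a + (1 - tti) * u' a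
       = u' a + Poly_Mapping.single (i - 1) 1 * (u a - u' a)"
      by (simp only: cr6 e)
  qed
  ultimately show ?case by (simp only:)
qed

lemma T_Q: "\<forall>v u u'. v \<in> T \<longrightarrow> u \<in> T \<longrightarrow> u' \<in> T \<longrightarrow> (\<lambda>a. v a + ((1 - tt) * p) * (u a - u' a)) \<in> T"
  using subset_UNIV[of "Poly_Mapping.keys p"]
proof (induction p rule: frag_induction)
  case zero
  show ?case by simp
next
  case (one k)
  show ?case
  proof (intro allI impI)
    fix v u u' assume h: "v \<in> T" "u \<in> T" "u' \<in> T"
    have y: "(\<lambda>a. u' a + Poly_Mapping.single k 1 * (u a - u' a)) \<in> T" by (rule T_pow[OF h(2,3)])
    have "(\<lambda>a. v a + (1 - tt) * ((\<lambda>a. u' a + Poly_Mapping.single k 1 * (u a - u' a)) a - u' a)) \<in> T"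
      by (rule T_B[OF h(1) y h(3)])
    moreover have "(\<lambda>a. v a + (1 - tt) * ((\<lambda>a. u' a + Poly_Mapping.single k 1 * (u a - u' a)) a - u' a))
       = (\<lambda>a. v a + ((1 - tt) * frag_of k) * (u a - u' a))"
      by (rule ext) (simp only: cr7 mult.assoc)
    ultimately show "(\<lambda>a. v a + ((1 - tt) * frag_of k) * (u a - u' a)) \<in> T" by (simp only:)
  qed
next
  case (diff a b)
  show ?case
  proof (intro allI impI)
    fix v u u' assume h: "v \<in> T" "u \<in> T" "u' \<in> T"
    have v1: "(\<lambda>x. v x + ((1 - tt) * a) * (u x - u' x)) \<in> T" using diff.IH(1) h by blast
    have "(\<lambda>y. (\<lambda>x. v x + ((1 - tt) * a) * (u x - u' x)) y + ((1 - tt) * b) * (u' y - u y)) \<in> T"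
      using diff.IH(2) v1 h by blast
    moreover have "(\<lambda>y. (\<lambda>x. v x + ((1 - tt) * a) * (u x - u' x)) y + ((1 - tt) * b) * (u' y - u y))
       = (\<lambda>x. v x + ((1 - tt) * (a - b)) * (u x - u' x))"
      by (rule ext) (simp only: cr8)
    ultimately show "(\<lambda>x. v x + ((1 - tt) * (a - b)) * (u x - u' x)) \<in> T" by (simp only:)
  qed
qed

definition G where "G = {n. \<forall>v\<in>T. \<forall>p. (\<lambda>a. v a + ((1 - tt) * p) * n a) \<in> T}"

lemma G_T: assumes "u \<in> T" "u' \<in> T" shows "u - u' \<in> G"
  unfolding G_def mem_Collect_eq minus_apply
proof (intro ballI allI)
  fix v p assume "v \<in> T"
  then show "(\<lambda>a. v a + ((1 - tt) * p) * (u a - u' a)) \<in> T" using T_Q[of p] assms by blast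
qed

lemma G_D: "n \<in> G \<Longrightarrow> v \<in> T \<Longrightarrow> (\<lambda>a. v a + ((1 - tt) * p) * n a) \<in> T"
  unfolding G_def by blast

lemma G_add: assumes "n \<in> G" "m \<in> G" shows "n + m \<in> G"
  unfolding G_def mem_Collect_eq
proof (intro ballI allI)
  fix v p assume v: "v \<in> T"
  have "(\<lambda>a. v a + ((1 - tt) * p) * n a) \<in> T" by (rule G_D[OF assms(1) v])
  then have "(\<lambda>b. (\<lambda>a. v a + ((1 - tt) * p) * n a) b + ((1 - tt) * p) * m b) \<in> T"
    by (rule G_D[OF assms(2)])
  moreover have "(\<lambda>b. (\<lambda>a. v a + ((1 - tt) * p) * n a) b + ((1 - tt) * p) * m b)
    = (\<lambda>a. v a + ((1 - tt) * p) * (n + m) a)"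
    by (rule ext) (simp only: plus_fun_apply cr9)
  ultimately show "(\<lambda>a. v a + ((1 - tt) * p) * (n + m) a) \<in> T" by (simp only:)
qed

lemma G_scal: assumes "n \<in> G" shows "(\<lambda>a. q * n a) \<in> G"
  unfolding G_def mem_Collect_eq
proof (intro ballI allI)
  fix v p assume v: "v \<in> T"
  have "(\<lambda>a. v a + ((1 - tt) * (p * q)) * n a) \<in> T" by (rule G_D[OF assms v])
  then show "(\<lambda>a. v a + ((1 - tt) * p) * (q * n a)) \<in> T" by (simp only: cr10)
qed

lemma G_zero: "0 \<in> G" unfolding G_def mem_Collect_eq
proof (intro ballI allI)
  fix v p assume v: "v \<in> T"
  have "(\<lambda>a. v a + ((1 - tt) * p) * (0::'e set + nat \<Rightarrow> lp1) a) = v" by (rule ext) simp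
  then show "(\<lambda>a. v a + ((1 - tt) * p) * (0::'e set + nat \<Rightarrow> lp1) a) \<in> T" using v by (simp only:)
qed

lemma G_sum: "finite I \<Longrightarrow> (\<And>i. i \<in> I \<Longrightarrow> g i \<in> G) \<Longrightarrow> (\<Sum>i\<in>I. g i) \<in> G"
  by (induction I rule: finite_induct) (simp_all add: G_zero G_add)

lemma T_G: "v \<in> T \<Longrightarrow> n \<in> G \<Longrightarrow> (\<lambda>a. v a + (1 - tt) * n a) \<in> T"
  using G_D[of n v 1] by (simp only: mult_1_right)

definition H where "H = {h. \<exists>n\<in>G. (\<lambda>a. h a - (1 - tt) * n a) \<in> Zs}"

lemma H_Z: "z \<in> Zs \<Longrightarrow> z \<in> H"
  unfolding H_def using G_zero by (intro CollectI bexI[of _ 0]) simp_all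

lemma H_G: "n \<in> G \<Longrightarrow> (\<lambda>a. (1 - tt) * n a) \<in> H"
  unfolding H_def using Z_zero by (intro CollectI bexI[of _ n]) (simp_all add: zero_fun_def)

lemma H_add: assumes "h \<in> H" "h' \<in> H" shows "h + h' \<in> H"
proof -
  obtain n where n: "n \<in> G" "(\<lambda>a. h a - (1 - tt) * n a) \<in> Zs" using assms by (auto simp: H_def)
  obtain n' where n': "n' \<in> G" "(\<lambda>a. h' a - (1 - tt) * n' a) \<in> Zs" using assms by (auto simp: H_def)
  have "(\<lambda>a. h a - (1 - tt) * n a) + (\<lambda>a. h' a - (1 - tt) * n' a) \<in> Zs" by (rule Z_add[OF n(2) n'(2)])
  moreover have "(\<lambda>a. h a - (1 - tt) * n a) + (\<lambda>a. h' a - (1 - tt) * n' a)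
     = (\<lambda>a. (h + h') a - (1 - tt) * (n + n') a)"
    by (rule ext) (simp only: plus_fun_apply gr1)
  ultimately have Zm: "(\<lambda>a. (h + h') a - (1 - tt) * (n + n') a) \<in> Zs" by (simp only:)
  show ?thesis unfolding H_def mem_Collect_eq by (rule bexI[where x="n + n'"], rule Zm, rule G_add[OF n(1) n'(1)])
qed

lemma H_scal: assumes "h \<in> H" shows "(\<lambda>a. q * h a) \<in> H"
proof -
  obtain n where n: "n \<in> G" "(\<lambda>a. h a - (1 - tt) * n a) \<in> Zs" using assms by (auto simp: H_def)
  have "(\<lambda>a. q * (\<lambda>a. h a - (1 - tt) * n a) a) \<in> Zs" by (rule Z_scal[OF n(2)])
  moreover have "(\<lambda>a. q * (\<lambda>a. h a - (1 - tt) * n a) a) = (\<lambda>a. q * h a - (1 - tt) * (\<lambda>a. q * n a) a)"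
    by (rule ext) (simp only: gr2)
  ultimately have Zm: "(\<lambda>a. q * h a - (1 - tt) * (\<lambda>a. q * n a) a) \<in> Zs" by (simp only:)
  show ?thesis unfolding H_def mem_Collect_eq by (rule bexI[where x="\<lambda>a. q * n a"], rule Zm, rule G_scal[OF n(1)])
qed

lemma H_zero: "0 \<in> H" by (rule H_Z[OF Z_zero])

lemma H_sum: "finite I \<Longrightarrow> (\<And>i. i \<in> I \<Longrightarrow> g i \<in> H) \<Longrightarrow> (\<Sum>i\<in>I. g i) \<in> H"
  by (induction I rule: finite_induct) (simp_all add: H_zero H_add)

lemma T_H: assumes "v \<in> T" "h \<in> H" shows "v + h \<in> T"
proof -
  obtain n where n: "n \<in> G" "(\<lambda>a. h a - (1 - tt) * n a) \<in> Zs" using assms by (auto simp: H_def)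
  have "(\<lambda>a. v a + (1 - tt) * n a) + (\<lambda>a. h a - (1 - tt) * n a) \<in> T"
    by (rule T_Z[OF T_G[OF assms(1) n(1)] n(2)])
  moreover have "(\<lambda>a. v a + (1 - tt) * n a) + (\<lambda>a. h a - (1 - tt) * n a) = v + h"
    by (rule ext) (simp only: plus_fun_apply gr3)
  ultimately show ?thesis by (simp only:)
qed

end


lemma dv1: "(S::'a::comm_ring_1) - 1 = (1 - t) * q \<Longrightarrow> t * S - 1 = (1 - t) * (t * q - 1)"
proof -
  assume h: "S - 1 = (1 - t) * q"
  have "t * S - 1 = t * (S - 1) + (t - 1)" by (simp add: algebra_simps)
  also have "\<dots> = (1 - t) * (t * q - 1)" unfolding h by (simp add: algebra_simps)
  finally show ?thesis .
qed

lemma dv2: "(s::'a::comm_ring_1) * t = 1 \<Longrightarrow> S - 1 = (1 - t) * q \<Longrightarrow> s * S - 1 = (1 - t) * (s * q + s)"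
proof -
  assume h1: "s * t = 1" and h: "S - 1 = (1 - t) * q"
  have "s * S - 1 = s * (S - 1) + (s - s * t)" unfolding h1 by (simp add: algebra_simps)
  also have "\<dots> = (1 - t) * (s * q + s)" unfolding h by (simp add: algebra_simps)
  finally show ?thesis .
qed

lemma pow_div: "\<exists>q. Poly_Mapping.single k (1::int) - 1 = (1 - tt) * q"
proof (induction k rule: int_induct[where k=0])
  case base show ?case by (rule exI[of _ 0]) simp
next
  case (step1 i)
  then obtain q where q: "Poly_Mapping.single i (1::int) - 1 = (1 - tt) * q" by blast
  have e: "tt * Poly_Mapping.single i 1 = Poly_Mapping.single (i + 1) (1::int)"
    by (simp add: mult_single add.commute)
  show ?case using dv1[OF q] unfolding e by blast
next
  case (step2 i)
  then obtain q where q: "Poly_Mapping.single i (1::int) - 1 = (1 - tt) * q" by blast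
  have e: "tti * Poly_Mapping.single i 1 = Poly_Mapping.single (i - 1) (1::int)"
    by (simp add: mult_single)
  have tt': "tti * tt = 1" by (simp add: mult_single)
  show ?case using dv2[OF tt' q] unfolding e by blast
qed

lemma lp1_div_aux: "\<exists>q. p - of_int (eps p) = (1 - tt) * q"
  using subset_UNIV[of "Poly_Mapping.keys p"]
proof (induction p rule: frag_induction)
  case zero show ?case by (rule exI[of _ 0]) simp
next
  case (one k) then show ?case using pow_div[of k] by simp
next
  case (diff a b)
  then obtain qa qb where qa: "a - of_int (eps a) = (1 - tt) * qa" and qb: "b - of_int (eps b) = (1 - tt) * qb"
    by blast
  have "(a - b) - of_int (eps (a - b)) = (a - of_int (eps a)) - (b - of_int (eps b))"
    by (simp add: eps_diff)
  also have "\<dots> = (1 - tt) * (qa - qb)" unfolding qa qb by (simp add: right_diff_distrib)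
  finally show ?case by blast
qed

lemma lp1_div: "eps p = 0 \<Longrightarrow> \<exists>q. p = (1 - tt) * q"
  using lp1_div_aux[of p] by simp

lemma gg1: "p * ((y::'a::comm_ring_1) - x) = (- p) * (x - y)" by (simp add: algebra_simps)
lemma gg2: "p * ((x::'a::comm_ring_1) - y) + p * (y - z) = p * (x - z)" by (simp add: algebra_simps)
lemma gg3: "- (p * (X::'a::comm_ring_1)) = (- p) * X" by simp
lemma gg4: "((v::'a::ab_group_add) - P) + (P - Q) + (Q - E) = v - E" by simp
lemma gg5: "(e::'a::ab_group_add) + (v - e) = v" by simp

context ld
begin

definition Con where "Con a a' \<longleftrightarrow> (\<forall>p. (\<lambda>b. p * (ee a b - ee a' b)) \<in> H)"

lemma Con_refl: "Con a a"
  unfolding Con_def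
proof
  fix p
  have "(\<lambda>b. p * (ee a b - ee a b)) = 0" by (rule ext) simp
  then show "(\<lambda>b. p * (ee a b - ee a b)) \<in> H" using H_zero by (simp only:)
qed

lemma Con_sym: "Con a a' \<Longrightarrow> Con a' a"
  unfolding Con_def
proof
  fix p assume h: "\<forall>p. (\<lambda>b. p * (ee a b - ee a' b)) \<in> H"
  have "(\<lambda>b. (- p) * (ee a b - ee a' b)) \<in> H" using h by blast
  moreover have "(\<lambda>b. (- p) * (ee a b - ee a' b)) = (\<lambda>b. p * (ee a' b - ee a b))"
    by (rule ext) (rule gg1[symmetric])
  ultimately show "(\<lambda>b. p * (ee a' b - ee a b)) \<in> H" by (simp only:)
qed

lemma Con_trans: assumes "Con a a'" "Con a' a''" shows "Con a a''"
  unfolding Con_def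
proof
  fix p
  have "(\<lambda>b. p * (ee a b - ee a' b)) + (\<lambda>b. p * (ee a' b - ee a'' b)) \<in> H"
    using assms unfolding Con_def by (intro H_add) blast+
  moreover have "(\<lambda>b. p * (ee a b - ee a' b)) + (\<lambda>b. p * (ee a' b - ee a'' b)) = (\<lambda>b. p * (ee a b - ee a'' b))"
    by (rule ext) (simp only: plus_fun_apply gg2)
  ultimately show "(\<lambda>b. p * (ee a b - ee a'' b)) \<in> H" by (simp only:)
qed

lemma rho_free: "c \<in> crs D \<Longrightarrow> rho D c \<in> free_mod D"
  unfolding rho_def by (intro fm_add fm_diff fm_smul fm_basis a123_in)

lemma Zrho: assumes c: "c \<in> crs D" shows "red (rho D c) \<in> Zs"
proof -
  have "gpair (rho D c) 1 - (gpair (rho D c) 1 - E (red (rho D c))) \<in> RM"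
    by (rule rels_diff[OF tens_rels.ker[OF rho_imrho[OF c]] Dec1[OF rho_free[OF c]]])
  then show ?thesis unfolding Zs_def ag_h by simp
qed

lemma Con_cross: assumes c: "c \<in> crs D" shows "Con (a3 D c) (a2 D c)"
  unfolding Con_def
proof
  fix p
  have n: "(\<lambda>b. p * (ee (a1 D c) - ee (a2 D c)) b) \<in> G"
    by (rule G_scal[OF G_T[OF T_basis T_basis]]) (rule a123_in[OF c])+
  have "(\<lambda>b. (- p) * red (rho D c) b) \<in> Zs" by (rule Z_scal[OF Zrho[OF c]])
  moreover have "(\<lambda>b. (- p) * red (rho D c) b) =
     (\<lambda>b. p * (ee (a3 D c) b - ee (a2 D c) b) - (1 - tt) * (\<lambda>b. p * (ee (a1 D c) - ee (a2 D c)) b) b)"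
    by (rule ext) (simp only: red_rho minus_apply cr11 gg3)
  ultimately have Zm: "(\<lambda>b. p * (ee (a3 D c) b - ee (a2 D c) b) - (1 - tt) * (\<lambda>b. p * (ee (a1 D c) - ee (a2 D c)) b) b) \<in> Zs"
    by (simp only:)
  show "(\<lambda>b. p * (ee (a3 D c) b - ee (a2 D c) b)) \<in> H"
    unfolding H_def mem_Collect_eq
    by (rule bexI[where x="\<lambda>b. p * (ee (a1 D c) - ee (a2 D c)) b"], rule Zm, rule n)
qed

lemma strand_con: "(e, e') \<in> (strand_rel D)\<^sup>* \<Longrightarrow> Con (arc_of D e) (arc_of D e')"
proof (induction rule: rtrancl_induct)
  case base show ?case by (rule Con_refl)
next
  case (step y z)
  from step(2) obtain c where c: "c \<in> crs D" and
    yz: "(y = inov D c \<and> z = outov D c) \<or> (y = inun D c \<and> z = outun D c)"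
    unfolding strand_rel_def by blast
  have "Con (arc_of D y) (arc_of D z)"
  proof (cases "y = inov D c \<and> z = outov D c")
    case True
    then have "(y, z) \<in> arc_rel D" using c by (auto simp: arc_rel_def)
    then show ?thesis using arc_of_eq Con_refl by metis
  next
    case False
    then have yz2: "y = inun D c" "z = outun D c" using yz by auto
    show ?thesis
    proof (cases "pos D c")
      case True
      then show ?thesis using Con_sym[OF Con_cross[OF c]] yz2 by (simp add: a2_def a3_def)
    next
      case False
      then show ?thesis using Con_cross[OF c] yz2 by (simp add: a2_def a3_def)
    qed
  qed
  then show ?case using step(3) Con_trans by blast
qed

lemma kappa_Inr: "kappa D (Inr k) = labL D k" by (simp add: kappa_def)

lemma comp_con: assumes a: "a \<in> arcs D" and a': "a' \<in> arcs D" and k: "kappa D a = kappa D a'"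
  shows "Con a a'"
proof -
  have L: "\<forall>e \<in> edg D. \<forall>e' \<in> edg D. labE D e = labE D e' \<longrightarrow> (e, e') \<in> (strand_rel D)\<^sup>*"
    "inj_on (labL D) {..<nloops D}" "labL D ` {..<nloops D} \<inter> labE D ` edg D = {}"
    using LD by (simp_all add: link_diagram_def)
  show ?thesis
  proof (cases "a \<in> arc_of D ` edg D")
    case True
    then obtain e where e: "e \<in> edg D" "a = arc_of D e" by blast
    show ?thesis
    proof (cases "a' \<in> arc_of D ` edg D")
      case True
      then obtain e' where e': "e' \<in> edg D" "a' = arc_of D e'" by blast
      have "labE D e = labE D e'" using k e e' by (simp add: kappa_arc)
      then show ?thesis using L(1) e e' strand_con by blast
    next
      case False
      then obtain k' where "k' < nloops D" "a' = Inr k'" using a' by (auto simp: arcs_def)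
      then have "labE D e \<in> labL D ` {..<nloops D}" using k e by (auto simp: kappa_arc kappa_Inr)
      then show ?thesis using L(3) e by blast
    qed
  next
    case False
    then obtain kk where kk: "kk < nloops D" "a = Inr kk" using a by (auto simp: arcs_def)
    show ?thesis
    proof (cases "a' \<in> arc_of D ` edg D")
      case True
      then obtain e' where e': "e' \<in> edg D" "a' = arc_of D e'" by blast
      then have "labL D kk = labE D e'" using k kk by (simp add: kappa_arc kappa_Inr)
      then have "labE D e' \<in> labL D ` {..<nloops D}" using kk(1) by (metis image_eqI lessThan_iff)
      then show ?thesis using L(3) e' by blast
    next
      case False
      then obtain k' where k': "k' < nloops D" "a' = Inr k'" using a' by (auto simp: arcs_def)
      then have "kk = k'" using L(2) kk k by (auto simp: kappa_Inr inj_on_def)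
      then show ?thesis using kk k' Con_refl by simp
    qed
  qed
qed

lemma rep_ex: "\<exists>a\<in>arcs D. kappa D a = j"
proof -
  have "j \<in> labE D ` edg D \<union> labL D ` {..<nloops D}" using LD by (simp add: link_diagram_def)
  then show ?thesis
  proof
    assume "j \<in> labE D ` edg D"
    then obtain x where "x \<in> edg D" "j = labE D x" by blast
    then show ?thesis by (intro bexI[of _ "arc_of D x"]) (simp_all add: kappa_arc arc_in)
  next
    assume "j \<in> labL D ` {..<nloops D}"
    then obtain x where "x < nloops D" "j = labL D x" by blast
    then show ?thesis by (intro bexI[of _ "Inr x"]) (simp_all add: kappa_Inr arcs_def)
  qed
qed

end


context ld
begin

lemma red_final:
  assumes A: "(\<Sum>a\<in>arcs D. v a) = 1"
    and B: "\<And>j. (\<Sum>a\<in>{a. a \<in> arcs D \<and> kappa D a = j}. eps (v a)) = (if j = i then 1 else 0)"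
  shows "v \<in> T"
proof -
  define r where "r j = (SOME a. a \<in> arcs D \<and> kappa D a = j)" for j
  have r: "r j \<in> arcs D \<and> kappa D (r j) = j" for j
    unfolding r_def using rep_ex[of j] by (metis (mono_tags, lifting) someI_ex)
  define s where "s j = (\<Sum>a\<in>{a. a \<in> arcs D \<and> kappa D a = j}. v a)" for j
  have sums: "(\<Sum>j\<in>UNIV. s j) = 1"
    unfolding s_def using sum.group[OF fin_arcs finite_UNIV subset_UNIV, of v] A by simp
  define h1 where "h1 = v - (\<Sum>a\<in>arcs D. (\<lambda>b. v a * ee a b))"
  define h2 where "h2 = (\<Sum>a\<in>arcs D. (\<lambda>b. v a * (ee a b - ee (r (kappa D a)) b)))"
  define h4 where "h4 = (\<Sum>j\<in>UNIV. (\<lambda>b. s j * (ee (r j) b - ee (r i) b)))"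
  have H1: "h1 \<in> H"
  proof (rule H_Z, rule Z_arcs)
    fix b assume b: "b \<in> arcs D"
    show "h1 b = 0" unfolding h1_def minus_apply sum_fun_apply ee_def using b fin_arcs by simp
  qed
  have H2: "h2 \<in> H" unfolding h2_def
  proof (rule H_sum[OF fin_arcs])
    fix a assume a: "a \<in> arcs D"
    have "Con a (r (kappa D a))" by (rule comp_con[OF a]) (use r in auto)
    then show "(\<lambda>b. v a * (ee a b - ee (r (kappa D a)) b)) \<in> H" unfolding Con_def by blast
  qed
  have H4: "h4 \<in> H" unfolding h4_def
  proof (rule H_sum[OF finite_UNIV])
    fix j :: 'm
    show "(\<lambda>b. s j * (ee (r j) b - ee (r i) b)) \<in> H"
    proof (cases "j = i")
      case True
      have "(\<lambda>b. s j * (ee (r j) b - ee (r i) b)) = 0" by (rule ext) (simp add: True)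
      then show ?thesis using H_zero by (simp only:)
    next
      case False
      have "eps (s j) = 0" unfolding s_def
        by (subst eps_sum) (use fin_arcs B[of j] False in auto)
      then obtain q where q: "s j = (1 - tt) * q" using lp1_div by blast
      have "(\<lambda>b. (1 - tt) * (\<lambda>b. q * (ee (r j) - ee (r i)) b) b) \<in> H"
        by (rule H_G[OF G_scal[OF G_T[OF T_basis T_basis]]]) (use r in auto)
      moreover have "(\<lambda>b. (1 - tt) * (\<lambda>b. q * (ee (r j) - ee (r i)) b) b) = (\<lambda>b. s j * (ee (r j) b - ee (r i) b))"
        by (rule ext) (simp only: q minus_apply mult.assoc)
      ultimately show ?thesis by (simp only:)
    qed
  qed
  have "ee (r i) + (h1 + h2 + h4) = v"
  proof (rule ext)
    fix b
    define P where "P = (\<Sum>a\<in>arcs D. v a * ee a b)"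
    define Q where "Q = (\<Sum>a\<in>arcs D. v a * ee (r (kappa D a)) b)"
    have e1: "h1 b = v b - P" unfolding h1_def P_def minus_apply sum_fun_apply ..
    have e2: "h2 b = P - Q" unfolding h2_def P_def Q_def sum_fun_apply right_diff_distrib sum_subtractf ..
    have g: "(\<Sum>j\<in>UNIV. s j * ee (r j) b) = Q"
    proof -
      have "(\<Sum>j\<in>UNIV. s j * ee (r j) b) = (\<Sum>j\<in>UNIV. \<Sum>a\<in>{a. a \<in> arcs D \<and> kappa D a = j}. v a * ee (r (kappa D a)) b)"
        unfolding s_def sum_distrib_right by (intro sum.cong refl) auto
      also have "\<dots> = Q" unfolding Q_def by (rule sum.group[OF fin_arcs finite_UNIV subset_UNIV])
      finally show ?thesis .
    qed
    have e4: "h4 b = Q - ee (r i) b"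
    proof -
      have "h4 b = (\<Sum>j\<in>UNIV. s j * ee (r j) b) - (\<Sum>j\<in>UNIV. s j) * ee (r i) b"
        unfolding h4_def sum_fun_apply right_diff_distrib sum_subtractf sum_distrib_right ..
      then show ?thesis unfolding g sums mult_1 .
    qed
    show "(ee (r i) + (h1 + h2 + h4)) b = v b"
      unfolding plus_fun_apply e1 e2 e4 gg4 gg5 ..
  qed
  moreover have "ee (r i) + (h1 + h2 + h4) \<in> T"
    by (rule T_H[OF T_basis H_add[OF H_add[OF H1 H2] H4]]) (use r in auto)
  ultimately show ?thesis by (simp only:)
qed

end


lemma ag_z: "((a::'a::ab_group_add) + b) - a - b = 0" by simp
lemma ag_y: "((F::'a::ab_group_add) - G) - (F - X) - (P - G) = X - P" by simp
lemma ag_x: "((f::'a::ab_group_add) - ev) + (ev - er) - (gx - er) = f - gx" by simp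

abbreviation "RI \<equiv> tens_rels (augmentation_ideal :: ('m::finite) lp set) {0} (*)"

definition J1 :: "('m::finite) \<Rightarrow> ('m lp \<times> lp1) \<Rightarrow> (unit \<Rightarrow>\<^sub>0 int)" where
  "J1 j = (\<lambda>(f, l). Poly_Mapping.single () (Dj j f * eps l))"

definition J2 :: "(('m::finite) lp \<times> lp1) \<Rightarrow> lp1" where
  "J2 = (\<lambda>(f, l). tau f * l)"

lemma J1_rels: fixes j :: "'m::finite" shows "g \<in> RI \<Longrightarrow> frag_extend (J1 j) g = 0"
proof -
  assume g: "g \<in> RI"
  have "frag_extend (J1 j) g \<in> {0}"
  proof (rule rels_map[OF g])
    show "\<And>x x' l. x \<in> augmentation_ideal \<Longrightarrow> x' \<in> augmentation_ideal \<Longrightarrow>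
         J1 j (x + x', l) - J1 j (x, l) - J1 j (x', l) \<in> {0}"
      unfolding J1_def prod.case Dj_add distrib_right single_add ag_z by simp
    show "\<And>x l l'. x \<in> augmentation_ideal \<Longrightarrow> J1 j (x, l + l') - J1 j (x, l) - J1 j (x, l') \<in> {0}"
      unfolding J1_def prod.case eps_add distrib_left single_add ag_z by simp
    show "\<And>x r l. x \<in> augmentation_ideal \<Longrightarrow> J1 j (r * x, l) - J1 j (x, tau r * l) \<in> {0}"
    proof -
      fix x r :: "'m lp" and l assume "x \<in> augmentation_ideal"
      then have "eps x = 0" by (simp add: aug_iff)
      then have "Dj j (r * x) * eps l = Dj j x * eps (tau r * l)"
        by (simp add: Dj_mult eps_mult eps_tau)
      then show "J1 j (r * x, l) - J1 j (x, tau r * l) \<in> {0}"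
        unfolding J1_def prod.case by simp
    qed
    show "\<And>k l. k \<in> {0} \<Longrightarrow> J1 j (k, l) \<in> {0}"
      unfolding J1_def by simp
  qed simp_all
  then show ?thesis by simp
qed

lemma J2_rels: "g \<in> RI \<Longrightarrow> frag_extend J2 g = 0"
proof -
  assume g: "g \<in> RI"
  have "frag_extend J2 g \<in> {0}"
  proof (rule rels_map[OF g])
    show "\<And>x x' l. x \<in> augmentation_ideal \<Longrightarrow> x' \<in> augmentation_ideal \<Longrightarrow>
         J2 (x + x', l) - J2 (x, l) - J2 (x', l) \<in> {0}"
      unfolding J2_def prod.case tau_add distrib_right ag_z by simp
    show "\<And>x l l'. x \<in> augmentation_ideal \<Longrightarrow> J2 (x, l + l') - J2 (x, l) - J2 (x, l') \<in> {0}"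
      unfolding J2_def prod.case distrib_left ag_z by simp
    show "\<And>x r l. x \<in> augmentation_ideal \<Longrightarrow> J2 (r * x, l) - J2 (x, tau r * l) \<in> {0}"
      unfolding J2_def prod.case tau_mult by (simp add: ac_simps)
    show "\<And>k l. k \<in> {0} \<Longrightarrow> J2 (k, l) \<in> {0}"
      unfolding J2_def by simp
  qed simp_all
  then show ?thesis by simp
qed

lemma tt_ne: "tt - 1 \<noteq> (0::lp1)"
proof
  assume "tt - 1 = (0::lp1)"
  then have "Poly_Mapping.lookup (tt - 1) 1 = Poly_Mapping.lookup (0::lp1) 1" by simp
  then show False by (simp add: lookup_minus lookup_one)
qed

context ld
begin

abbreviation "Phi \<equiv> (\<lambda>(x, l). gpair (phiL D x) l)"

lemma Phi_rels: "f \<in> RM \<Longrightarrow> frag_extend Phi f \<in> RI"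
proof (erule rels_map)
  show "0 \<in> RI" by (rule tens_rels.zero)
  show "\<And>a b. a \<in> RI \<Longrightarrow> b \<in> RI \<Longrightarrow> a + b \<in> RI" by (rule tens_rels.plus)
  show "\<And>a. a \<in> RI \<Longrightarrow> - a \<in> RI" by (rule tens_rels.neg)
  show "\<And>x x' l. x \<in> free_mod D \<Longrightarrow> x' \<in> free_mod D \<Longrightarrow> Phi (x + x', l) - Phi (x, l) - Phi (x', l) \<in> RI"
    unfolding prod.case phi_add by (rule tens_rels.add1[OF phi_aug phi_aug])
  show "\<And>x l l'. x \<in> free_mod D \<Longrightarrow> Phi (x, l + l') - Phi (x, l) - Phi (x, l') \<in> RI"
    unfolding prod.case by (rule tens_rels.add2[OF phi_aug])
  show "\<And>x r l. x \<in> free_mod D \<Longrightarrow> Phi (smul r x, l) - Phi (x, tau r * l) \<in> RI"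
    unfolding prod.case phi_smul by (rule tens_rels.bal[OF phi_aug])
  show "\<And>k l. k \<in> im_rho D \<Longrightarrow> Phi (k, l) \<in> RI"
    unfolding prod.case by (simp only: phi_imrho) (rule tens_rels.ker, simp)
qed

lemma Phi_chain: "frag_extend Phi f \<in> tens_chains augmentation_ideal"
  unfolding tens_chains_def using keys_frag_extend[of Phi f]
  by (force simp: gpair_def phi_aug split: prod.splits)

lemma Phi_E: "frag_extend Phi (E v) = (\<Sum>a\<in>arcs D. gpair (tvar (kappa D a) - 1) (v a))"
  unfolding E_def frag_extend_sum[OF fin_arcs] o_def gpair_frag frag_extend_of prod.case
  by (rule sum.cong) (simp_all add: phi_basis)

lemma invariants:
  assumes d: "frag_extend Phi (E v) - gpair (tvar i - 1) 1 \<in> RI"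
  shows "(\<Sum>a\<in>arcs D. v a) = 1"
    and "\<And>j. (\<Sum>a\<in>{a. a \<in> arcs D \<and> kappa D a = j}. eps (v a)) = (if j = i then 1 else 0)"
proof -
  have "frag_extend J2 (frag_extend Phi (E v) - gpair (tvar i - 1) 1) = 0" by (rule J2_rels[OF d])
  then have "(\<Sum>a\<in>arcs D. (tt - 1) * v a) - (tt - 1) * 1 = 0"
    unfolding frag_extend_diff unfolding Phi_E
    unfolding frag_extend_sum[OF fin_arcs] o_def gpair_frag frag_extend_of J2_def prod.case tau_tvar1 .
  then have "(tt - 1) * ((\<Sum>a\<in>arcs D. v a) - 1) = 0"
    by (simp only: sum_distrib_left[symmetric] right_diff_distrib)
  then show "(\<Sum>a\<in>arcs D. v a) = 1" using tt_ne by simp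
next
  fix j
  have "frag_extend (J1 j) (frag_extend Phi (E v) - gpair (tvar i - 1) 1) = 0" by (rule J1_rels[OF d])
  then have "(\<Sum>a\<in>arcs D. Poly_Mapping.single () (Dj j (tvar (kappa D a) - 1) * eps (v a)))
       - Poly_Mapping.single () (Dj j (tvar i - 1) * eps (1::lp1)) = 0"
    unfolding frag_extend_diff unfolding Phi_E
    unfolding frag_extend_sum[OF fin_arcs] o_def gpair_frag frag_extend_of J1_def prod.case .
  then have "Poly_Mapping.lookup ((\<Sum>a\<in>arcs D. Poly_Mapping.single () (Dj j (tvar (kappa D a) - 1) * eps (v a)))
       - Poly_Mapping.single () (Dj j (tvar i - 1) * eps (1::lp1))) () = 0" by simp
  then have "(\<Sum>a\<in>arcs D. (if kappa D a = j then eps (v a) else 0)) = (if i = j then 1 else 0)"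
    by (simp add: lookup_minus lookup_sum Dj_tvar)
  then show "(\<Sum>a\<in>{a. a \<in> arcs D \<and> kappa D a = j}. eps (v a)) = (if j = i then 1 else 0)"
    using sum.inter_filter[OF fin_arcs, of "\<lambda>a. eps (v a)" "\<lambda>a. kappa D a = j"] by (auto split: if_splits)
qed

end


context ld
begin

lemma sub1: assumes x: "x \<in> QA D"
  shows "ptens (free_mod D) (im_rho D) smul x 1 \<in> {W \<in> Mred D. phi_tau D W \<in> (\<lambda>i. ItensOne (tvar i - 1)) ` UNIV}"
proof -
  let ?W = "ptens (free_mod D) (im_rho D) smul x 1"
  have xf: "x \<in> free_mod D" by (rule QA_free[OF x])
  have gc: "gpair x 1 \<in> tens_chains (free_mod D)" by (rule gpair_chain[OF xf])
  have W: "?W = tcls (free_mod D) (im_rho D) smul (gpair x 1)" by (simp add: ptens_def)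
  have WM: "?W \<in> Mred D" unfolding W Mred_def tensor_def tcls_def by (rule quotientI[OF gc])
  obtain i where i: "phiL D x = tvar i - 1" using QA_phi[OF x] by blast
  define g where "g = (SOME f. f \<in> ?W)"
  have "gpair x 1 \<in> ?W" unfolding W by (rule tcls_self[OF gc])
  then have gW: "g \<in> ?W" unfolding g_def by (rule someI)
  then have g: "g \<in> tens_chains (free_mod D)" "gpair x 1 - g \<in> RM" unfolding W by (auto dest: tcls_mem)
  have "frag_extend Phi (gpair x 1 - g) \<in> RI" by (rule Phi_rels[OF g(2)])
  then have d: "gpair (tvar i - 1) 1 - frag_extend Phi g \<in> RI"
    unfolding frag_extend_diff unfolding gpair_frag frag_extend_of prod.case i .
  have ic: "gpair (tvar i - 1) 1 \<in> tens_chains augmentation_ideal"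
    by (rule gpair_chain) (simp add: aug_iff eps_tvar)
  have "phi_tau D ?W = tcls augmentation_ideal {0} (*) (frag_extend Phi g)"
    unfolding phi_tau_def g_def ..
  also have "\<dots> = tcls augmentation_ideal {0} (*) (gpair (tvar i - 1) 1)"
    by (rule tcls_eq[OF ic Phi_chain d, symmetric])
  also have "\<dots> = ItensOne (tvar i - 1)" by (simp add: ItensOne_def ptens_def)
  finally show ?thesis using WM by blast
qed

lemma sub2: assumes WM: "W \<in> Mred D" and i: "phi_tau D W = ItensOne (tvar i - 1)"
  shows "W \<in> QAred D"
proof -
  obtain f where fc: "f \<in> tens_chains (free_mod D)" and W: "W = tcls (free_mod D) (im_rho D) smul f"
    using WM unfolding Mred_def tensor_def tcls_def by (auto elim: quotientE)
  obtain v where v: "f - E v \<in> RM" using Chain[OF fc] by blast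
  define g where "g = (SOME f. f \<in> W)"
  have "f \<in> W" unfolding W by (rule tcls_self[OF fc])
  then have gW: "g \<in> W" unfolding g_def by (rule someI)
  then have g: "g \<in> tens_chains (free_mod D)" "f - g \<in> RM" unfolding W by (auto dest: tcls_mem)
  have "tcls augmentation_ideal {0} (*) (frag_extend Phi g) = tcls augmentation_ideal {0} (*) (gpair (tvar i - 1) 1)"
    using i unfolding phi_tau_def g_def ItensOne_def ptens_def .
  then have d1: "gpair (tvar i - 1) 1 - frag_extend Phi g \<in> RI"
    using tcls_eqD[OF Phi_chain] by blast
  have "frag_extend Phi (f - g) - frag_extend Phi (f - E v) - (gpair (tvar i - 1) 1 - frag_extend Phi g) \<in> RI"
    by (rule rels_diff[OF rels_diff[OF Phi_rels[OF g(2)] Phi_rels[OF v]] d1])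
  then have d: "frag_extend Phi (E v) - gpair (tvar i - 1) 1 \<in> RI"
    unfolding frag_extend_diff ag_y .
  have vT: "v \<in> T" by (rule red_final[OF invariants(1)[OF d] invariants(2)[OF d]])
  then obtain x where x: "x \<in> QA D" "v - red x \<in> Zs" by (auto simp: T_def)
  have "E (v - red x) - (E (v - red x) - (E v - E (red x))) \<in> RM"
    by (rule rels_diff[OF x(2)[unfolded Zs_def mem_Collect_eq] E_diff])
  then have e: "E v - E (red x) \<in> RM" unfolding ag_h .
  have "(f - E v) + (E v - E (red x)) - (gpair x 1 - E (red x)) \<in> RM"
    by (rule rels_diff[OF tens_rels.plus[OF v e] Dec1[OF QA_free[OF x(1)]]])
  then have fx: "f - gpair x 1 \<in> RM" unfolding ag_x .
  have "W = tcls (free_mod D) (im_rho D) smul (gpair x 1)"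
    unfolding W by (rule tcls_eq[OF fc gpair_chain[OF QA_free[OF x(1)]] fx])
  then have "W = ptens (free_mod D) (im_rho D) smul x 1" by (simp add: ptens_def)
  then show ?thesis unfolding QAred_def using x(1) by blast
qed

end

theorem proposition15:
  fixes D :: "('c, 'e, 'm::finite) diagram"
  assumes "link_diagram D"
  shows "QAred D = {W \<in> Mred D. phi_tau D W \<in> (\<lambda>i. ItensOne (tvar i - 1)) ` UNIV}"
proof -
  interpret ld D by unfold_locales (rule assms)
  show ?thesis
  proof
    show "QAred D \<subseteq> {W \<in> Mred D. phi_tau D W \<in> (\<lambda>i. ItensOne (tvar i - 1)) ` UNIV}"
      unfolding QAred_def using sub1 by blast
    show "{W \<in> Mred D. phi_tau D W \<in> (\<lambda>i. ItensOne (tvar i - 1)) ` UNIV} \<subseteq> QAred D"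
      using sub2 by blast
  qed
qed


end
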